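(* Let $d=2$ and assume the polynomial degree satisfies $1\le M\le 13$. There exist constants $c_1>0$, $c_2>0$ independent of $h$ such that for every interface $\Gamma^{k,\ell}$ and every $\eta_{\ell,k}\in\mathcal Y_h^{\ell,k}\cap H^1_0(\Gamma^{k,\ell})$ there exists $\psi_{\ell,k}\in\tilde W_h^{\ell,k}$ with $$\int_{\Gamma^{k,\ell}}\big(\eta_{\ell,k}+\pi_{k,\ell}(\eta_{\ell,k})\big)\psi_{\ell,k}\ge c_1\|\eta_{\ell,k}\|^2_{L^2(\Gamma^{k,\ell})},\qquad \|\psi_{\ell,k}\|_{L^2(\Gamma^{k,\ell})}\le c_2\|\eta_{\ell,k}\|_{L^2(\Gamma^{k,\ell})}.$$
   Context: $\Omega\subset\mathbb R^2$ is decomposed into non-overlapping geometrically conforming subdomains $\Omega^k$; $\Gamma^{k,\ell}=\partial\Omega^k\cap\partial\Omega^\ell$ is a common edge. Each $\Omega^k$ has its own uniformly regular triangular mesh $\mathcal T_h^k$ ($h_T/\rho_T\le\sigma$, $\tau h\le h_T$ with $\sigma,\tau$ independent of $h$, $h$ the maximal element diameter), possibly non-matching across interfaces. $Y_h^k$ = continuous piecewise $\mathcal P_M$ functions on $\mathcal T_h^k$; $\mathcal Y_h^{k,\ell}$ is the space of traces on $\Gamma^{k,\ell}$ of $Y_h^k$ (a 1D finite element space on the induced mesh with consecutive vertices $x_0,\dots,x_n$, $x_0,x_n$ the endpoints of $\Gamma^{k,\ell}$); $\tilde W_h^{k,\ell}$ is the subspace of $\mathcal Y_h^{k,\ell}$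 of functions that are polynomials of degree $\le M-1$ on $[x_0,x_1]$ and $[x_{n-1},x_n]$. $\mathcal Y_h^{\ell,k},\tilde W_h^{\ell,k}$ are the analogous spaces built from the mesh of $\Omega^\ell$. $\pi_{k,\ell}$ is the $L^2(\Gamma^{k,\ell})$-orthogonal projection onto $\tilde W_h^{k,\ell}$. *)

theory Defs
  imports "HOL-Analysis.Analysis" "HOL-Computational_Algebra.Polynomial"
begin

text \<open>The interface Gamma is identified (by arc length) with the interval [a,b].
  Quasi-uniformity inherited from the 2D shape-regular, quasi-uniform meshes:
  every trace element has length between theta*h and h.\<close>

definition mesh1d :: "real \<Rightarrow> real \<Rightarrow> real \<Rightarrow> real \<Rightarrow> nat \<Rightarrow> (nat \<Rightarrow> real) \<Rightarrow> bool" where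
  "mesh1d a b h \<theta> n x \<longleftrightarrow> 0 < h \<and> 1 \<le> n \<and> x 0 = a \<and> x n = b \<and>
     (\<forall>i<n. \<theta> * h \<le> x (Suc i) - x i \<and> x (Suc i) - x i \<le> h)"

text \<open>Trace space: continuous piecewise polynomials of degree at most M on the mesh
  (continuity is automatic since the pieces are taken on closed subintervals);
  functions are normalised to be 0 outside [a,b].\<close>

definition Ysp :: "real \<Rightarrow> real \<Rightarrow> nat \<Rightarrow> (nat \<Rightarrow> real) \<Rightarrow> nat \<Rightarrow> (real \<Rightarrow> real) set" where
  "Ysp a b n x M = {f. (\<forall>t. t \<notin> {a..b} \<longrightarrow> f t = 0) \<and>
     (\<forall>i<n. \<exists>p::real poly. degree p \<le> M \<and> (\<forall>t\<in>{x i..x (Suc i)}. f t = poly p t))}"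

definition Wt :: "real \<Rightarrow> real \<Rightarrow> nat \<Rightarrow> (nat \<Rightarrow> real) \<Rightarrow> nat \<Rightarrow> (real \<Rightarrow> real) set" where
  "Wt a b n x M = {f \<in> Ysp a b n x M.
     (\<exists>p::real poly. degree p \<le> M - 1 \<and> (\<forall>t\<in>{x 0..x 1}. f t = poly p t)) \<and>
     (\<exists>q::real poly. degree q \<le> M - 1 \<and> (\<forall>t\<in>{x (n - 1)..x n}. f t = poly q t))}"

definition L2ip :: "real \<Rightarrow> real \<Rightarrow> (real \<Rightarrow> real) \<Rightarrow> (real \<Rightarrow> real) \<Rightarrow> real" where
  "L2ip a b f g = integral {a..b} (\<lambda>t. f t * g t)"

definition L2norm :: "real \<Rightarrow> real \<Rightarrow> (real \<Rightarrow> real) \<Rightarrow> real" where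
  "L2norm a b f = sqrt (L2ip a b f f)"

definition L2proj :: "real \<Rightarrow> real \<Rightarrow> nat \<Rightarrow> (nat \<Rightarrow> real) \<Rightarrow> nat \<Rightarrow> (real \<Rightarrow> real) \<Rightarrow> (real \<Rightarrow> real)" where
  "L2proj a b n x M f = (THE w. w \<in> Wt a b n x M \<and>
      (\<forall>v\<in>Wt a b n x M. L2ip a b (\<lambda>t. f t - w t) v = 0))"

end

theory Submission
  imports Defs "HOL-Library.Function_Algebras"
begin


definition ltabs :: "int list list" where
  "ltabs = [[1],
   [-1, 2],
   [1, -6, 6],
   [-1, 12, -30, 20],
   [1, -20, 90, -140, 70],
   [-1, 30, -210, 560, -630, 252],
   [1, -42, 420, -1680, 3150, -2772, 924],
   [-1, 56, -756, 4200, -11550, 16632, -12012, 3432],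
   [1, -72, 1260, -9240, 34650, -72072, 84084, -51480, 12870],
   [-1, 90, -1980, 18480, -90090, 252252, -420420, 411840, -218790, 48620],
   [1, -110, 2970, -34320, 210210, -756756, 1681680, -2333760, 1969110, -923780, 184756],
   [-1, 132, -4290, 60060, -450450, 2018016, -5717712, 10501920, -12471030, 9237800, -3879876, 705432],
   [1, -156, 6006, -100100, 900900, -4900896, 17153136, -39907296, 62355150, -64664600, 42678636, -16224936, 2704156],
   [-1, 182, -8190, 160160, -1701700, 11027016, -46558512, 133024320, -261891630, 355655300, -327202876, 194699232, -67603900, 10400600]]"
definition htabs :: "int list list" where
  "htabs = [[], [1],
   [-4, 6],
   [9, -36, 30],
   [-16, 120, -240, 140],
   [25, -300, 1050, -1400, 630],
   [-36, 630, -3360, 7560, -7560, 2772],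
   [49, -1176, 8820, -29400, 48510, -38808, 12012],
   [-64, 2016, -20160, 92400, -221760, 288288, -192192, 51480],
   [81, -3240, 41580, -249480, 810810, -1513512, 1621620, -926640, 218790],
   [-100, 4950, -79200, 600600, -2522520, 6306300, -9609600, 8751600, -4375800, 923780],
   [121, -7260, 141570, -1321320, 6936930, -22198176, 44924880, -57760560, 45727110, -20323160, 3879876],
   [-144, 10296, -240240, 2702700, -17297280, 68612544, -176432256, 299304720, -332560800, 232792560, -93117024, 16224936],
   [169, -14196, 390390, -5205200, 39819780, -191134944, 605260656, -1296987120, 1891439550, -1849407560, 1160082924, -421848336, 67603900]]"

definition ipl :: "int list \<Rightarrow> nat \<Rightarrow> rat" where
 "ipl c j = (\<Sum>k<length c. of_int (c!k) / of_nat (k+j+1))"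

definition chk :: "nat \<Rightarrow> bool" where
 "chk M = (length (ltabs!M) = M+1 \<and> length (htabs!M) = M \<and> ltabs!M!M \<noteq> 0 \<and>
    sum_list (ltabs!M) = 1 \<and> ltabs!M!0 = (-1)^M \<and> sum_list (htabs!M) = int M \<and>
    htabs!M!0 = (-1)^(M-1) * int M^2 \<and>
    (\<forall>j<M. ipl (ltabs!M) j = 0) \<and> ipl (ltabs!M) M * of_int (ltabs!M!M) = 1/(2 * of_nat M + 1) \<and>
    (\<forall>j<M. ipl (htabs!M) j = (if j = 0 then (-1)^(M-1) else 0)))"

lemma chk_all: "list_all chk [1..<14]" by code_simp

lemma chk: assumes "1 \<le> M" "M \<le> 13" shows "chk M"
proof -
  have "M \<in> set [1..<14]" using assms by auto
  thus ?thesis using chk_all by (simp add: list_all_iff)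
qed

lemma has_int_pow01: "((\<lambda>s::real. s^n) has_integral (1/(real n+1))) {0..1}"
proof -
  have d: "\<And>x::real. DERIV (\<lambda>x. x^Suc n / Suc n) x :> x^n"
    by (intro derivative_eq_intros) auto
  have "((\<lambda>s::real. s^n) has_integral ((1::real)^Suc n/Suc n - 0^Suc n/Suc n)) {0..1}"
    apply (rule fundamental_theorem_of_calculus)
     apply simp
    apply (rule has_real_derivative_iff_has_vector_derivative[THEN iffD1])
    apply (rule has_field_derivative_at_within)
    apply (rule d)
    done
  thus ?thesis by (simp add: add.commute)
qed

lemma poly_sum_N: "degree (p::real poly) < N \<Longrightarrow> poly p s = (\<Sum>k<N. coeff p k * s^k)"
proof -
  assume d: "degree p < N"
  have "poly p s = (\<Sum>k\<le>degree p. coeff p k * s^k)" by (rule poly_altdef)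
  also have "\<dots> = (\<Sum>k<N. coeff p k * s^k)"
    apply (rule sum.mono_neutral_left) using d by (auto simp: coeff_eq_0)
  finally show ?thesis .
qed

lemma has_int_poly_pow:
  fixes p :: "real poly"
  assumes "degree p < N"
  shows "((\<lambda>s. poly p s * s^j) has_integral (\<Sum>k<N. coeff p k / (real k + real j + 1))) {0..1}"
proof -
  have e: "(\<lambda>s. poly p s * s^j) = (\<lambda>s. \<Sum>k<N. coeff p k * s^(k+j))"
    using poly_sum_N[OF assms] by (auto simp: sum_distrib_right power_add mult.assoc)
  have "((\<lambda>s. \<Sum>k<N. coeff p k * s^(k+j)) has_integral (\<Sum>k<N. coeff p k * (1/(real (k+j)+1)))) {0..1}"
    by (intro has_integral_sum has_integral_mult_right has_int_pow01) auto
  thus ?thesis unfolding e by (simp add: add.assoc)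
qed

lemma has_int_poly_gen:
  fixes p q :: "real poly"
  assumes "degree q < N" and "\<And>j. j < N \<Longrightarrow> ((\<lambda>s. poly p s * s^j) has_integral v j) {0..1}"
  shows "((\<lambda>s. poly p s * poly q s) has_integral (\<Sum>j<N. coeff q j * v j)) {0..1}"
proof -
  have e: "(\<lambda>s. poly p s * poly q s) = (\<lambda>s. \<Sum>j<N. coeff q j * (poly p s * s^j))"
    using poly_sum_N[OF assms(1)] by (auto simp: sum_distrib_left algebra_simps)
  show ?thesis unfolding e
    by (intro has_integral_sum has_integral_mult_right) (auto intro: assms(2))
qed

definition ellP :: "nat \<Rightarrow> real poly" where "ellP M = Poly (map of_int (ltabs!M))"
definition hP :: "nat \<Rightarrow> real poly" where "hP M = Poly (map of_int (htabs!M))"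

lemma poly_Poly_1: "poly (Poly xs) (1::real) = sum_list xs"
  by (induction xs) auto

lemma degree_Poly_le: "degree (Poly (xs::real list)) \<le> length xs - 1"
  by (rule degree_le) (auto simp: coeff_Poly_eq nth_default_def)

lemma of_rat_ipl: "real_of_rat (ipl c j) = (\<Sum>k<length c. real_of_int (c!k) / (real k + real j + 1))"
  by (simp add: ipl_def of_rat_sum of_rat_divide of_rat_add add_ac)

lemma int_Poly_pow:
  "((\<lambda>s. poly (Poly (map real_of_int c)) s * s^j) has_integral real_of_rat (ipl c j)) {0..1}"
proof (cases "c = []")
  case True thus ?thesis by (simp add: ipl_def)
next
  case False
  have "degree (Poly (map real_of_int c)) < length c"
    using degree_Poly_le[of "map real_of_int c"] False by (cases c) auto
  from has_int_poly_pow[OF this, of j] show ?thesis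
    by (simp add: of_rat_ipl coeff_Poly_eq nth_default_def)
qed

context
  fixes M :: nat assumes M1: "1 \<le> M" and M13: "M \<le> 13"
begin

lemma chkM: "chk M" using chk M1 M13 by blast

lemma len_l: "length (ltabs!M) = M+1" and len_h: "length (htabs!M) = M"
  using chkM by (auto simp: chk_def)

lemma coeff_ellP: "coeff (ellP M) k = (if k \<le> M then real_of_int (ltabs!M!k) else 0)"
  using len_l by (auto simp: ellP_def coeff_Poly_eq nth_default_def)

lemma coeff_hP: "coeff (hP M) k = (if k < M then real_of_int (htabs!M!k) else 0)"
  using len_h by (auto simp: hP_def coeff_Poly_eq nth_default_def)

lemma degree_ellP: "degree (ellP M) = M"
proof (rule antisym)
  show "degree (ellP M) \<le> M" by (rule degree_le) (simp add: coeff_ellP)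
  show "M \<le> degree (ellP M)" by (rule le_degree) (use chkM in \<open>simp add: coeff_ellP chk_def\<close>)
qed

lemma lead_ellP: "coeff (ellP M) M \<noteq> 0"
  using chkM by (simp add: coeff_ellP chk_def)

lemma degree_hP: "degree (hP M) < M"
proof -
  have "degree (hP M) \<le> M - 1" by (rule degree_le) (auto simp: coeff_hP)
  thus ?thesis using M1 by linarith
qed

lemma ellP_1: "poly (ellP M) 1 = 1"
  using chkM unfolding ellP_def chk_def poly_Poly_1 by (simp add: sum_list_of_int)

lemma ellP_0: "poly (ellP M) 0 = (-1)^M"
  using chkM by (simp add: poly_0_coeff_0 coeff_ellP chk_def)

lemma hP_1: "poly (hP M) 1 = real M"
  using chkM unfolding hP_def chk_def poly_Poly_1 by (simp add: sum_list_of_int)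

lemma int_ell_pow: "((\<lambda>s. poly (ellP M) s * s^j) has_integral real_of_rat (ipl (ltabs!M) j)) {0..1}"
  unfolding ellP_def by (rule int_Poly_pow)

lemma int_h_pow: "((\<lambda>s. poly (hP M) s * s^j) has_integral real_of_rat (ipl (htabs!M) j)) {0..1}"
  unfolding hP_def by (rule int_Poly_pow)

lemma int_ell_low:
  assumes "degree Q < M"
  shows "((\<lambda>s. poly (ellP M) s * poly Q s) has_integral 0) {0..1}"
proof -
  have "((\<lambda>s. poly (ellP M) s * poly Q s) has_integral (\<Sum>j<M. coeff Q j * 0)) {0..1}"
  proof (rule has_int_poly_gen[OF assms])
    fix j assume "j < M"
    thus "((\<lambda>s. poly (ellP M) s * s ^ j) has_integral 0) {0..1}"
      using int_ell_pow[of j] chkM by (simp add: chk_def)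
  qed
  thus ?thesis by simp
qed

lemma int_ell_sq: "((\<lambda>s. poly (ellP M) s * poly (ellP M) s) has_integral 1/(2*real M+1)) {0..1}"
proof -
  have "((\<lambda>s. poly (ellP M) s * poly (ellP M) s) has_integral
      (\<Sum>j<Suc M. coeff (ellP M) j * real_of_rat (ipl (ltabs!M) j))) {0..1}"
    by (rule has_int_poly_gen) (auto simp: degree_ellP intro: int_ell_pow)
  also have "(\<Sum>j<Suc M. coeff (ellP M) j * real_of_rat (ipl (ltabs!M) j))
      = coeff (ellP M) M * real_of_rat (ipl (ltabs!M) M)"
    using chkM by (simp add: chk_def)
  also have "\<dots> = real_of_rat (ipl (ltabs!M) M * of_int (ltabs!M!M))"
    by (simp add: coeff_ellP of_rat_mult)
  also have "\<dots> = 1/(2*real M+1)"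
    using chkM by (simp add: chk_def of_rat_divide of_rat_add of_rat_mult)
  finally show ?thesis .
qed

lemma int_h_low:
  assumes "degree Q < M"
  shows "((\<lambda>s. poly (hP M) s * poly Q s) has_integral (-1)^(M-1) * poly Q 0) {0..1}"
proof -
  have "((\<lambda>s. poly (hP M) s * poly Q s) has_integral
     (\<Sum>j<M. coeff Q j * (if j = 0 then (-1)^(M-1) else 0))) {0..1}"
  proof (rule has_int_poly_gen[OF assms])
    fix j assume "j < M"
    thus "((\<lambda>s. poly (hP M) s * s ^ j) has_integral (if j = 0 then (-1)^(M-1) else 0)) {0..1}"
      using int_h_pow[of j] chkM by (simp add: chk_def of_rat_power split: if_splits)
  qed
  also have "(\<Sum>j<M. coeff Q j * (if j = 0 then (-1)^(M-1) else 0)) = coeff Q 0 * (-1)^(M-1)"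
    using M1 by (simp add: if_distrib sum.delta cong: if_cong)
  finally show ?thesis by (simp add: poly_0_coeff_0 mult.commute)
qed

lemma int_h_sq: "((\<lambda>s. poly (hP M) s * poly (hP M) s) has_integral (real M)^2) {0..1}"
proof -
  have "poly (hP M) 0 = (-1)^(M-1) * (real M)^2"
    using chkM M1 by (simp add: poly_0_coeff_0 coeff_hP chk_def)
  moreover have "((-1::real)^(M-1)) * (-1)^(M-1) = 1"
    by (simp flip: power_add)
  ultimately show ?thesis using int_h_low[OF degree_hP] by (simp add: mult.assoc[symmetric])
qed

end

lemma hint01: "((\<lambda>s. poly F s * poly G s) has_integral integral {0..1} (\<lambda>s. poly F s * poly G s)) {(0::real)..1}"
  by (rule integrable_integral, rule integrable_continuous_interval) (intro continuous_intros)

lemma coefX_nonneg_r: fixes m :: real assumes "1 \<le> m" "m \<le> 13"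
 shows "3/2/m - 5/4/(2*m+1) - (2/m+1)/20 - 1/100/(2*m+1) \<ge> 0"
proof -
  have p: "m*m \<le> 13*m" using assms by (simp add: mult_right_mono)
  have a: "0 < m" "0 < 2*m+1" using assms by auto
  have e: "3/2/m - 5/4/(2*m+1) - (2/m+1)/20 - 1/100/(2*m+1) = 7/(5*m) - 63/(50*(2*m+1)) - 1/20"
  proof -
    have e1: "\<And>b::real. 5/4/b + 1/100/b = 63/(50*b)" by (case_tac "b = 0") (simp_all add: field_simps)
    have e2: "\<And>b::real. 3/2/b - (2/b+1)/20 = 7/(5*b) - 1/20" by (case_tac "b = 0") (simp_all add: field_simps)
    have g: "\<And>A B C D E F G::real. B + D = F \<Longrightarrow> A - C = E - G \<Longrightarrow> A - B - C - D = E - F - G" by linarith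
    show ?thesis by (rule g[OF e1[of "2*m+1"] e2[of m]])
  qed
  have k: "10*m*m \<le> 149*m + 140" using p assms by linarith
  have h1: "63/(50*(2*m+1)) \<le> 63/(50*(2*m))" using a by (intro divide_left_mono) auto
  have h2: "7/(5*m) - 63/(50*(2*m)) = 77/(100*m)" using a by (simp add: field_simps)
  have h3: "1/20 \<le> 77/(100*m)" using a assms by (simp add: field_simps)
  have "0 \<le> 7/(5*m) - 63/(50*(2*m+1)) - 1/20" using h1 h2 h3 by linarith
  thus ?thesis using e by simp
qed
lemma coefX_nonneg:
  assumes "1 \<le> M" "M \<le> (13::nat)"
  shows "3/2/real M - 5/4/(2*real M+1) - (2/real M+1)/20 - 1/100/(2*real M+1) \<ge> 0"
  by (rule coefX_nonneg_r) (use assms in auto)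

lemma coefN_le_r: fixes m :: real assumes "1 \<le> m" "m \<le> 13"
  shows "1 + 2/m \<le> 81/(2*m+1)"
proof -
  have p: "m*m \<le> 13*m" using assms by (simp add: mult_right_mono)
  have a: "0 < m" "0 < 2*m+1" using assms by auto
  have k: "2 + m * (m * 2) \<le> m * 76" using p assms by linarith
  show ?thesis using a k by (simp add: field_simps)
qed
lemma coefN_le:
  assumes "1 \<le> M" "M \<le> (13::nat)"
  shows "1 + 2/real M \<le> 81/(2*real M+1)"
  by (rule coefN_le_r) (use assms in auto)

lemma degree_lt_of_coeff:
  fixes U :: "real poly"
  assumes "degree U \<le> M" "coeff U M = 0" "1 \<le> M" shows "degree U < M"
proof (rule ccontr)
  assume "\<not> degree U < M"
  hence "degree U = M" using assms by simp
  hence "lead_coeff U = 0" using assms by simp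
  hence "U = 0" by simp
  thus False using \<open>degree U = M\<close> assms by simp
qed

lemma ref_local:
  fixes P :: "real poly"
  assumes M1: "1 \<le> M" and M13: "M \<le> 13" and dP: "degree P \<le> M" and P0: "poly P 0 = 0"
  shows "\<exists>\<Psi> pp pq qq. degree \<Psi> < M \<and> poly \<Psi> 1 = poly P 1 \<and>
    ((\<lambda>s. poly P s * poly P s) has_integral pp) {0..1} \<and>
    ((\<lambda>s. poly P s * poly \<Psi> s) has_integral pq) {0..1} \<and>
    ((\<lambda>s. poly \<Psi> s * poly \<Psi> s) has_integral qq) {0..1} \<and>
    3/2*pq - 5/4*pp - qq/20 \<ge> pp/100 \<and> qq \<le> 81*pp"
proof -
  let ?l = "ellP M" and ?h = "hP M"
  define A where "A = coeff P M / coeff ?l M"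
  define U where "U = P - smult A ?l"
  define \<Psi> where "\<Psi> = U + smult (A / real M) ?h"
  have lM: "coeff ?l M \<noteq> 0" using lead_ellP[OF M1 M13] .
  have dU: "degree U < M"
  proof (rule degree_lt_of_coeff[OF _ _ M1])
    have "degree (smult A ?l) \<le> M" using degree_smult_le[of A ?l] degree_ellP[OF M1 M13] by simp
    thus "degree U \<le> M" unfolding U_def using dP by (intro degree_diff_le)
    show "coeff U M = 0" unfolding U_def A_def using lM by simp
  qed
  have dh: "degree ?h < M" by (rule degree_hP[OF M1 M13])
  have dPsi: "degree \<Psi> < M" unfolding \<Psi>_def
    using dU dh degree_smult_le[of "A / real M" ?h] by (intro degree_add_less) auto
  have Mpos: "real M > 0" using M1 by simp
  have Psi1: "poly \<Psi> 1 = poly P 1"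
    unfolding \<Psi>_def U_def using ellP_1[OF M1 M13] hP_1[OF M1 M13] Mpos by simp
  have U0: "poly U 0 = - A * (-1)^M"
    unfolding U_def using P0 ellP_0[OF M1 M13] by simp
  define uu where "uu = integral {0..1} (\<lambda>s. poly U s * poly U s)"
  have iuu: "((\<lambda>s. poly U s * poly U s) has_integral uu) {0..1}" unfolding uu_def by (rule hint01)
  have uu0: "uu \<ge> 0" by (rule has_integral_nonneg[OF iuu]) simp
  have ilU: "((\<lambda>s. poly ?l s * poly U s) has_integral 0) {0..1}" by (rule int_ell_low[OF M1 M13 dU])
  have ilh: "((\<lambda>s. poly ?l s * poly ?h s) has_integral 0) {0..1}" by (rule int_ell_low[OF M1 M13 dh])
  have ihU: "((\<lambda>s. poly ?h s * poly U s) has_integral (-1)^(M-1) * poly U 0) {0..1}"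
    by (rule int_h_low[OF M1 M13 dU])
  have ill: "((\<lambda>s. poly ?l s * poly ?l s) has_integral 1/(2*real M+1)) {0..1}" by (rule int_ell_sq[OF M1 M13])
  have ihh: "((\<lambda>s. poly ?h s * poly ?h s) has_integral (real M)^2) {0..1}" by (rule int_h_sq[OF M1 M13])
  have sgn: "(-1::real)^(M-1) * (-1)^M = -1"
  proof -
    have "(-1::real)^(M-1) * (-1)^M = (-1)^(M - 1 + M)" by (simp add: power_add)
    also have "M - 1 + M = Suc (2*(M-1))" using M1 by simp
    finally show ?thesis by simp
  qed
  have hU: "(-1)^(M-1) * poly U 0 = A" using sgn unfolding U0 by (simp add: algebra_simps)
  define pp where "pp = uu + A^2/(2*real M+1)"
  define pq where "pq = uu + A^2/real M"
  define qq where "qq = uu + 2*A^2/real M + A^2"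
  have ePP: "(\<lambda>s. poly P s * poly P s) = (\<lambda>s. poly U s * poly U s + 2*A * (poly ?l s * poly U s) + A^2 * (poly ?l s * poly ?l s))"
    unfolding U_def by (auto simp: fun_eq_iff algebra_simps power2_eq_square)
  have iPP: "((\<lambda>s. poly P s * poly P s) has_integral pp) {0..1}"
    unfolding ePP pp_def using has_integral_add[OF has_integral_add[OF iuu has_integral_mult_right[OF ilU]] has_integral_mult_right[OF ill], of "2*A" "A^2"]
    by simp
  have ePQ: "(\<lambda>s. poly P s * poly \<Psi> s) = (\<lambda>s. poly U s * poly U s + (A/real M) * (poly ?h s * poly U s)
      + A * (poly ?l s * poly U s) + (A*A/real M) * (poly ?l s * poly ?h s))"
    unfolding \<Psi>_def U_def by (auto simp: fun_eq_iff algebra_simps)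
  have iPQ: "((\<lambda>s. poly P s * poly \<Psi> s) has_integral pq) {0..1}"
  proof -
    have "((\<lambda>s. poly P s * poly \<Psi> s) has_integral uu + (A/real M) * ((-1)^(M-1) * poly U 0) + A * 0 + (A*A/real M)*0) {0..1}"
      unfolding ePQ
      by (intro has_integral_add has_integral_mult_right iuu ihU ilU ilh)
    thus ?thesis unfolding hU pq_def by (simp add: power2_eq_square)
  qed
  have eQQ: "(\<lambda>s. poly \<Psi> s * poly \<Psi> s) = (\<lambda>s. poly U s * poly U s + (2*A/real M) * (poly ?h s * poly U s)
      + (A/real M)^2 * (poly ?h s * poly ?h s))"
    unfolding \<Psi>_def by (auto simp: fun_eq_iff algebra_simps power2_eq_square)
  have iQQ: "((\<lambda>s. poly \<Psi> s * poly \<Psi> s) has_integral qq) {0..1}"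
  proof -
    have "((\<lambda>s. poly \<Psi> s * poly \<Psi> s) has_integral uu + (2*A/real M) * ((-1)^(M-1) * poly U 0) + (A/real M)^2 * (real M)^2) {0..1}"
      unfolding eQQ
      by (intro has_integral_add has_integral_mult_right iuu ihU ihh)
    thus ?thesis unfolding hU qq_def using Mpos by (simp add: power2_eq_square field_simps)
  qed
  have X0: "A^2 \<ge> 0" by simp
  have c1: "3/2*pq - 5/4*pp - qq/20 - pp/100 = 19/100*uu +
     A^2 * (3/2/real M - 5/4/(2*real M+1) - (2/real M+1)/20 - 1/100/(2*real M+1))"
    unfolding pp_def pq_def qq_def by (simp add: algebra_simps add_divide_distrib diff_divide_distrib)
  have "3/2*pq - 5/4*pp - qq/20 - pp/100 \<ge> 0"
    unfolding c1 using uu0 coefX_nonneg[OF M1 M13] by simp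
  hence ineq1: "3/2*pq - 5/4*pp - qq/20 \<ge> pp/100" by simp
  have c2: "81*pp - qq = 80*uu + A^2 * (81/(2*real M+1) - (1 + 2/real M))"
    unfolding pp_def qq_def by (simp add: algebra_simps add_divide_distrib diff_divide_distrib)
  have "81*pp - qq \<ge> 0" unfolding c2 using uu0 coefN_le[OF M1 M13] by simp
  hence ineq2: "qq \<le> 81*pp" by simp
  show ?thesis using dPsi Psi1 iPP iPQ iQQ ineq1 ineq2 by blast
qed

lemma scale01:
  fixes G :: "real \<Rightarrow> real"
  assumes G: "(G has_integral v) {0..1}" and cd: "c < d" and oi: "(eo = c \<and> ei = d) \<or> (eo = d \<and> ei = c)"
  shows "((\<lambda>t. G ((t - eo)/(ei - eo))) has_integral (d - c) * v) {c..d}"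
proof -
  have io: "ei - eo \<noteq> 0" using oi cd by auto
  define m where "m = 1/(ei - eo)"
  define c' where "c' = - eo/(ei - eo)"
  have m0: "m \<noteq> 0" using io by (simp add: m_def)
  have A: "((\<lambda>x. G (m * x + c')) has_integral (1 / \<bar>m\<bar>) *\<^sub>R v) ((\<lambda>x. x / m - c' / m) ` {0..1})"
    by (rule has_integral_affinity01[OF G m0])
  have f: "(\<lambda>x. G (m * x + c')) = (\<lambda>t. G ((t - eo)/(ei - eo)))"
    unfolding m_def c'_def by (auto simp: fun_eq_iff diff_divide_distrib)
  have im: "((\<lambda>x. x / m - c' / m) ` {0..1}) = {c..d}"
    unfolding image_affinity_atLeastAtMost_div_diff using oi cd io
    by (auto simp: m_def c'_def field_simps)
  have val: "(1 / \<bar>m\<bar>) *\<^sub>R v = (d - c) * v"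
    using oi cd by (auto simp: m_def)
  show ?thesis using A unfolding f im val .
qed

lemma elem_local:
  fixes P :: "real poly"
  assumes M1: "1 \<le> M" and M13: "M \<le> 13" and cd: "c < d" and oi: "(eo = c \<and> ei = d) \<or> (eo = d \<and> ei = c)"
    and dP: "degree P \<le> M" and P0: "poly P eo = 0"
  shows "\<exists>\<Psi> pp pq qq. degree \<Psi> < M \<and> poly \<Psi> ei = poly P ei \<and>
    ((\<lambda>s. poly P s * poly P s) has_integral pp) {c..d} \<and>
    ((\<lambda>s. poly P s * poly \<Psi> s) has_integral pq) {c..d} \<and>
    ((\<lambda>s. poly \<Psi> s * poly \<Psi> s) has_integral qq) {c..d} \<and>
    3/2*pq - 5/4*pp - qq/20 \<ge> pp/100 \<and> qq \<le> 81*pp"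
proof -
  have io: "ei - eo \<noteq> 0" using oi cd by auto
  define Ph where "Ph = pcompose P [:eo, ei - eo:]"
  have Ph_eval: "\<And>s. poly Ph s = poly P (eo + (ei - eo) * s)" unfolding Ph_def by (simp add: poly_pcompose mult.commute)
  have dPh: "degree Ph \<le> M" unfolding Ph_def using dP io by (simp add: degree_pcompose)
  have Ph0: "poly Ph 0 = 0" using P0 by (simp add: Ph_eval)
  obtain Qh pp pq qq where Qh: "degree Qh < M" "poly Qh 1 = poly Ph 1"
    and i1: "((\<lambda>s. poly Ph s * poly Ph s) has_integral pp) {0..1}"
    and i2: "((\<lambda>s. poly Ph s * poly Qh s) has_integral pq) {0..1}"
    and i3: "((\<lambda>s. poly Qh s * poly Qh s) has_integral qq) {0..1}"
    and in1: "3/2*pq - 5/4*pp - qq/20 \<ge> pp/100" and in2: "qq \<le> 81*pp"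
    using ref_local[OF M1 M13 dPh Ph0] by blast
  define \<Psi> where "\<Psi> = pcompose Qh [:- eo/(ei - eo), 1/(ei - eo):]"
  have Psi_eval: "\<And>t. poly \<Psi> t = poly Qh ((t - eo)/(ei - eo))"
    unfolding \<Psi>_def by (simp add: poly_pcompose diff_divide_distrib)
  have P_eval: "\<And>t. poly P t = poly Ph ((t - eo)/(ei - eo))"
    using io by (simp add: Ph_eval)
  have dPsi: "degree \<Psi> < M" unfolding \<Psi>_def using Qh(1) io by (simp add: degree_pcompose)
  have Psii: "poly \<Psi> ei = poly P ei" using Qh(2) io by (simp add: Psi_eval P_eval)
  have L: "d - c > 0" using cd by simp
  have j1: "((\<lambda>s. poly P s * poly P s) has_integral (d-c)*pp) {c..d}"
    using scale01[OF i1 cd oi] by (simp add: P_eval)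
  have j2: "((\<lambda>s. poly P s * poly \<Psi> s) has_integral (d-c)*pq) {c..d}"
    using scale01[OF i2 cd oi] by (simp add: P_eval Psi_eval)
  have j3: "((\<lambda>s. poly \<Psi> s * poly \<Psi> s) has_integral (d-c)*qq) {c..d}"
    using scale01[OF i3 cd oi] by (simp add: Psi_eval)
  have k1: "3/2*((d-c)*pq) - 5/4*((d-c)*pp) - (d-c)*qq/20 \<ge> (d-c)*pp/100"
  proof -
    have "(d-c) * (pp/100) \<le> (d-c) * (3/2*pq - 5/4*pp - qq/20)" using in1 L by (intro mult_left_mono) auto
    thus ?thesis by (simp add: algebra_simps)
  qed
  have k2: "(d-c)*qq \<le> 81*((d-c)*pp)"
  proof -
    have "(d-c) * qq \<le> (d-c) * (81*pp)" using in2 L by (intro mult_left_mono) auto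
    thus ?thesis by (simp add: algebra_simps)
  qed
  show ?thesis using dPsi Psii j1 j2 j3 k1 k2 by blast
qed



lemma mesh_basic:
  assumes "mesh1d a b h \<theta> n x" "\<theta> > 0"
  shows "0 < h" "1 \<le> n" "x 0 = a" "x n = b" "\<And>i. i < n \<Longrightarrow> x i < x (Suc i)"
proof -
  show "0 < h" "1 \<le> n" "x 0 = a" "x n = b" using assms unfolding mesh1d_def by auto
  fix i assume "i < n"
  have "\<theta> * h > 0" using assms unfolding mesh1d_def by auto
  moreover have "\<theta> * h \<le> x (Suc i) - x i" using assms \<open>i < n\<close> unfolding mesh1d_def by auto
  ultimately show "x i < x (Suc i)" by simp
qed

lemma mesh_mono:
  assumes "mesh1d a b h \<theta> n x" "\<theta> > 0" "i \<le> j" "j \<le> n"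
  shows "x i \<le> x j"
  using assms(3,4)
proof (induction j)
  case 0 thus ?case by simp
next
  case (Suc j)
  show ?case
  proof (cases "i = Suc j")
    case True thus ?thesis by simp
  next
    case False
    hence "x i \<le> x j" using Suc by simp
    also have "x j < x (Suc j)" using mesh_basic(5)[OF assms(1,2)] Suc by simp
    finally show ?thesis by simp
  qed
qed

lemma mesh_smono:
  assumes "mesh1d a b h \<theta> n x" "\<theta> > 0" "i < j" "j \<le> n"
  shows "x i < x j"
proof -
  have "x i < x (Suc i)" using mesh_basic(5)[OF assms(1,2)] assms by simp
  also have "x (Suc i) \<le> x j" using mesh_mono[OF assms(1,2)] assms by simp
  finally show ?thesis .
qed

lemma mesh_range:
  assumes "mesh1d a b h \<theta> n x" "\<theta> > 0" "i \<le> n"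
  shows "a \<le> x i" "x i \<le> b"
  using mesh_mono[OF assms(1,2), of 0 i] mesh_mono[OF assms(1,2), of i n] assms mesh_basic[OF assms(1,2)] by auto

lemma mesh_cover_aux:
  assumes "mesh1d a b h \<theta> n x" "\<theta> > 0" "k \<le> n" "1 \<le> k" "x 0 \<le> t" "t \<le> x k"
  shows "\<exists>i<k. x i \<le> t \<and> t \<le> x (Suc i)"
  using assms(3-6)
proof (induction k)
  case 0 thus ?case by simp
next
  case (Suc k)
  show ?case
  proof (cases "t \<le> x k \<and> 1 \<le> k")
    case True
    then obtain i where "i<k" "x i \<le> t \<and> t \<le> x (Suc i)" using Suc by auto
    thus ?thesis by (intro exI[of _ i]) auto
  next
    case False
    have "x k \<le> t" using False Suc by (cases "k = 0") auto
    thus ?thesis using Suc by (intro exI[of _ k]) auto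
  qed
qed

lemma mesh_cover:
  assumes "mesh1d a b h \<theta> n x" "\<theta> > 0" "t \<in> {a..b}"
  shows "\<exists>i<n. x i \<le> t \<and> t \<le> x (Suc i)"
  using mesh_cover_aux[OF assms(1,2) order.refl] mesh_basic[OF assms(1,2)] assms(3) by auto

lemma Ysp_cont_aux:
  assumes "mesh1d a b h \<theta> n x" "\<theta> > 0" "f \<in> Ysp a b n x M" "1 \<le> k" "k \<le> n"
  shows "continuous_on {x 0..x k} f"
  using assms(4,5)
proof (induction k)
  case 0 thus ?case by simp
next
  case (Suc k)
  have kn: "k < n" using Suc.prems by simp
  obtain p where p: "\<forall>t\<in>{x k..x (Suc k)}. f t = poly p t"
    using assms(3) kn unfolding Ysp_def by blast
  have c2: "continuous_on {x k..x (Suc k)} f"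
  proof -
    have "continuous_on {x k..x (Suc k)} (\<lambda>t. poly p t)" by (intro continuous_intros)
    thus ?thesis using continuous_on_eq p by (metis (no_types, lifting))
  qed
  show ?case
  proof (cases "k = 0")
    case True thus ?thesis using c2 by simp
  next
    case False
    hence c1: "continuous_on {x 0..x k} f" using Suc by simp
    have "{x 0..x (Suc k)} = {x 0..x k} \<union> {x k..x (Suc k)}"
      using mesh_mono[OF assms(1,2), of 0 k] mesh_mono[OF assms(1,2), of k "Suc k"] Suc by auto
    thus ?thesis using continuous_on_closed_Un[OF closed_atLeastAtMost closed_atLeastAtMost c1 c2] by simp
  qed
qed

lemma Ysp_cont:
  assumes "mesh1d a b h \<theta> n x" "\<theta> > 0" "f \<in> Ysp a b n x M"
  shows "continuous_on {a..b} f"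
  using Ysp_cont_aux[OF assms, of n] mesh_basic[OF assms(1,2)] by simp


interpretation FV: vector_space "\<lambda>(c::real) (f::real\<Rightarrow>real) t. c * f t"
  by unfold_locales (auto simp: fun_eq_iff algebra_simps)

definition Cab :: "real \<Rightarrow> real \<Rightarrow> (real \<Rightarrow> real) set" where
  "Cab a b = {f. continuous_on {a..b} f}"

lemma Cab_subspace: "FV.subspace (Cab a b)"
  by (rule FV.subspaceI) (auto simp: Cab_def func_plus func_zero intro!: continuous_intros)

lemma Cab_prod_int: "f \<in> Cab a b \<Longrightarrow> g \<in> Cab a b \<Longrightarrow> (\<lambda>t. f t * g t) integrable_on {a..b}"
  unfolding Cab_def by (auto intro!: integrable_continuous_interval continuous_intros)

lemma ip_lin2:
  assumes "f1 \<in> Cab a b" "f2 \<in> Cab a b" "h \<in> Cab a b"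
  shows "L2ip a b (\<lambda>x. c1 * f1 x + c2 * f2 x) h = c1 * L2ip a b f1 h + c2 * L2ip a b f2 h"
proof -
  have e: "(\<lambda>x. (c1 * f1 x + c2 * f2 x) * h x) = (\<lambda>x. c1 * (f1 x * h x) + c2 * (f2 x * h x))"
    by (auto simp: fun_eq_iff algebra_simps)
  show ?thesis unfolding L2ip_def e
    by (rule integral_unique, intro has_integral_add has_integral_mult_right integrable_integral Cab_prod_int assms)
qed

lemma ip_sym: "L2ip a b f g = L2ip a b g f"
  unfolding L2ip_def by (simp add: mult.commute)

lemma ip_zero: "L2ip a b f (\<lambda>x. 0) = 0" "L2ip a b f 0 = 0"
  unfolding L2ip_def by auto

lemma ip_nonneg: "L2ip a b f f \<ge> 0"
  unfolding L2ip_def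
  by (cases "(\<lambda>t. f t * f t) integrable_on {a..b}") (auto intro: integral_nonneg simp: not_integrable_integral)

lemma ip_quad:
  assumes "g \<in> Cab a b" "r \<in> Cab a b"
  shows "L2ip a b (\<lambda>x. g x + t * r x) (\<lambda>x. g x + t * r x) = L2ip a b g g + 2*t*L2ip a b g r + t^2 * L2ip a b r r"
proof -
  let ?q = "\<lambda>x. g x + t * r x"
  have c: "?q \<in> Cab a b" using assms by (auto simp: Cab_def intro!: continuous_intros)
  have e1: "L2ip a b ?q ?q = L2ip a b g ?q + t * L2ip a b r ?q"
    using ip_lin2[OF assms c, of 1 t] by simp
  have e2: "L2ip a b g ?q = L2ip a b g g + t * L2ip a b r g"
    using ip_lin2[OF assms assms(1), of 1 t] ip_sym[of a b g ?q] by simp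
  have e3: "L2ip a b r ?q = L2ip a b g r + t * L2ip a b r r"
    using ip_lin2[OF assms assms(2), of 1 t] ip_sym[of a b r ?q] by simp
  have e4: "L2ip a b r g = L2ip a b g r" by (rule ip_sym)
  show ?thesis unfolding e1 e2 e3 e4 by (simp add: algebra_simps power2_eq_square)
qed

lemma span_Cab: "B \<subseteq> Cab a b \<Longrightarrow> FV.span B \<subseteq> Cab a b"
  by (rule FV.span_minimal[OF _ Cab_subspace])

lemma orth_span:
  assumes g: "g \<in> Cab a b" and B: "B \<subseteq> Cab a b" and o: "\<forall>v\<in>B. L2ip a b g v = 0"
  shows "\<forall>v\<in>FV.span B. L2ip a b g v = 0"
proof -
  have "FV.subspace {v \<in> Cab a b. L2ip a b g v = 0}"
  proof (rule FV.subspaceI)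
    show "0 \<in> {v \<in> Cab a b. L2ip a b g v = 0}" using Cab_subspace ip_zero by (auto simp: FV.subspace_def)
  next
    fix u v assume u: "u \<in> {v \<in> Cab a b. L2ip a b g v = 0}" and v: "v \<in> {v \<in> Cab a b. L2ip a b g v = 0}"
    have uv: "u + v = (\<lambda>x. 1 * u x + 1 * v x)" by (simp add: fun_eq_iff)
    have "L2ip a b g (u + v) = L2ip a b (\<lambda>x. 1 * u x + 1 * v x) g" unfolding uv by (rule ip_sym)
    also have "\<dots> = 1 * L2ip a b u g + 1 * L2ip a b v g" using u v g by (intro ip_lin2) auto
    also have "\<dots> = 0" using u v ip_sym[of a b u g] ip_sym[of a b v g] by simp
    finally show "u + v \<in> {v \<in> Cab a b. L2ip a b g v = 0}"
      using u v Cab_subspace by (auto simp: FV.subspace_def)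
  next
    fix c u assume u: "u \<in> {v \<in> Cab a b. L2ip a b g v = 0}"
    have cu: "(\<lambda>t. c * u t) = (\<lambda>x. c * u x + 0 * u x)" by simp
    have "L2ip a b g (\<lambda>t. c * u t) = L2ip a b (\<lambda>x. c * u x + 0 * u x) g" unfolding cu by (rule ip_sym)
    also have "\<dots> = c * L2ip a b u g + 0 * L2ip a b u g" using u g by (intro ip_lin2) auto
    also have "\<dots> = 0" using u ip_sym[of a b u g] by simp
    finally show "(\<lambda>t. c * u t) \<in> {v \<in> Cab a b. L2ip a b g v = 0}"
      using u Cab_subspace by (auto simp: FV.subspace_def)
  qed
  hence "FV.span B \<subseteq> {v \<in> Cab a b. L2ip a b g v = 0}"
    using B o by (intro FV.span_minimal) auto
  thus ?thesis by auto
qed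


lemma ip_cancel_r:
  assumes "g \<in> Cab a b" "r \<in> Cab a b" "L2ip a b r r = 0"
  shows "L2ip a b g r = 0"
proof (rule ccontr)
  assume ne: "L2ip a b g r \<noteq> 0"
  define t where "t = - (L2ip a b g g + 1) / (2 * L2ip a b g r)"
  have "0 \<le> L2ip a b (\<lambda>x. g x + t * r x) (\<lambda>x. g x + t * r x)" by (rule ip_nonneg)
  also have "\<dots> = L2ip a b g g + 2*t*L2ip a b g r" using ip_quad[OF assms(1,2), of t] assms(3) by simp
  also have "\<dots> = -1" using ne by (simp add: t_def field_simps)
  finally show False by simp
qed

lemma gs:
  assumes "finite B" "B \<subseteq> Cab a b" "f \<in> Cab a b"
  shows "\<exists>w\<in>FV.span B. \<forall>v\<in>B. L2ip a b (\<lambda>t. f t - w t) v = 0"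
  using assms
proof (induction B arbitrary: f rule: finite_induct)
  case empty
  show ?case by (intro bexI[of _ 0] FV.span_zero) auto
next
  case (insert bb B)
  have BC: "B \<subseteq> Cab a b" and bC: "bb \<in> Cab a b" using insert by auto
  have spBC: "FV.span B \<subseteq> Cab a b" by (rule span_Cab[OF BC])
  obtain wb where wb: "wb \<in> FV.span B" "\<forall>v\<in>B. L2ip a b (\<lambda>t. bb t - wb t) v = 0"
    using insert.IH[OF BC bC] by blast
  obtain wf where wf: "wf \<in> FV.span B" "\<forall>v\<in>B. L2ip a b (\<lambda>t. f t - wf t) v = 0"
    using insert.IH[OF BC insert.prems(2)] by blast
  define r where "r = (\<lambda>t. bb t - wb t)"
  define g where "g = (\<lambda>t. f t - wf t)"
  have wbC: "wb \<in> Cab a b" and wfC: "wf \<in> Cab a b" using wb wf spBC by auto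
  have rC: "r \<in> Cab a b" using bC wbC by (auto simp: r_def Cab_def intro!: continuous_intros)
  have gC: "g \<in> Cab a b" using insert.prems(2) wfC by (auto simp: g_def Cab_def intro!: continuous_intros)
  have r_orth: "\<forall>v\<in>FV.span B. L2ip a b r v = 0" using orth_span[OF rC BC] wb unfolding r_def by blast
  have g_orth: "\<forall>v\<in>FV.span B. L2ip a b g v = 0" using orth_span[OF gC BC] wf unfolding g_def by blast
  have sub: "FV.span B \<subseteq> FV.span (insert bb B)" by (rule FV.span_mono) auto
  have b_eq: "bb = (\<lambda>x. 1 * r x + 1 * wb x)" by (auto simp: r_def)
  have ip_b: "\<And>q. q \<in> Cab a b \<Longrightarrow> L2ip a b q bb = L2ip a b q r + L2ip a b q wb"
  proof -
    fix q assume q: "q \<in> Cab a b"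
    have "L2ip a b q bb = L2ip a b bb q" by (rule ip_sym)
    also have "\<dots> = 1 * L2ip a b r q + 1 * L2ip a b wb q" by (subst b_eq, rule ip_lin2[OF rC wbC q])
    also have "\<dots> = L2ip a b q r + L2ip a b q wb" using ip_sym[of a b r q] ip_sym[of a b wb q] by simp
    finally show "L2ip a b q bb = L2ip a b q r + L2ip a b q wb" .
  qed
  show ?case
  proof (cases "L2ip a b r r = 0")
    case True
    have gr: "L2ip a b g r = 0" by (rule ip_cancel_r[OF gC rC True])
    show ?thesis
    proof (intro bexI[of _ wf] ballI)
      show "wf \<in> FV.span (insert bb B)" using wf sub by auto
      fix v assume "v \<in> insert bb B"
      thus "L2ip a b (\<lambda>t. f t - wf t) v = 0"
      proof
        assume "v = bb"
        thus ?thesis using ip_b[OF gC] gr g_orth wb(1) unfolding g_def by simp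
      qed (use wf in auto)
    qed
  next
    case False
    define c where "c = L2ip a b g r / L2ip a b r r"
    define w where "w = (\<lambda>t. wf t + c * r t)"
    have wsp: "w \<in> FV.span (insert bb B)"
    proof -
      have "r \<in> FV.span (insert bb B)"
        unfolding r_def using FV.span_diff[OF FV.span_base[of bb "insert bb B"] subsetD[OF sub wb(1)]]
        by (simp add: fun_diff_def)
      hence "(\<lambda>t. c * r t) \<in> FV.span (insert bb B)" by (rule FV.span_scale)
      hence "wf + (\<lambda>t. c * r t) \<in> FV.span (insert bb B)" using wf(1) sub by (intro FV.span_add) auto
      thus ?thesis by (simp add: w_def func_plus)
    qed
    have fw: "(\<lambda>t. f t - w t) = (\<lambda>x. 1 * g x + (-c) * r x)" by (auto simp: w_def g_def)
    have fwC: "(\<lambda>t. f t - w t) \<in> Cab a b" unfolding fw using gC rC by (auto simp: Cab_def intro!: continuous_intros)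
    have key: "\<And>v. v \<in> Cab a b \<Longrightarrow> L2ip a b (\<lambda>t. f t - w t) v = L2ip a b g v - c * L2ip a b r v"
    proof -
      fix v assume v: "v \<in> Cab a b"
      show "L2ip a b (\<lambda>t. f t - w t) v = L2ip a b g v - c * L2ip a b r v"
        unfolding fw using ip_lin2[OF gC rC v, of 1 "-c"] by simp
    qed
    show ?thesis
    proof (intro bexI[of _ w] ballI wsp)
      fix v assume "v \<in> insert bb B"
      thus "L2ip a b (\<lambda>t. f t - w t) v = 0"
      proof
        assume vb: "v = bb"
        have "L2ip a b (\<lambda>t. f t - w t) bb = L2ip a b (\<lambda>t. f t - w t) r + L2ip a b (\<lambda>t. f t - w t) wb"
          by (rule ip_b[OF fwC])
        also have "\<dots> = (L2ip a b g r - c * L2ip a b r r) + (L2ip a b g wb - c * L2ip a b r wb)"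
          using key[OF rC] key[OF wbC] by simp
        also have "\<dots> = 0" using g_orth r_orth wb(1) False by (simp add: c_def)
        finally show ?thesis using vb by simp
      next
        assume "v \<in> B"
        hence "v \<in> FV.span B" by (rule FV.span_base)
        moreover have "v \<in> Cab a b" using \<open>v \<in> B\<close> BC by auto
        ultimately show ?thesis using key g_orth r_orth by simp
      qed
    qed
  qed
qed


lemma proj_exists:
  assumes V: "FV.subspace V" "V \<subseteq> Cab a b" and S0: "finite S0" "V \<subseteq> FV.span S0" and f: "f \<in> Cab a b"
  shows "\<exists>w\<in>V. \<forall>v\<in>V. L2ip a b (\<lambda>t. f t - w t) v = 0"
proof -
  obtain B where B: "B \<subseteq> V" "FV.independent B" "V \<subseteq> FV.span B" "card B = FV.dim V"
    by (rule FV.basis_exists)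
  have "B \<subseteq> FV.span S0" using B(1) S0(2) by (rule order.trans)
  hence fB: "finite B" using FV.independent_span_bound[OF S0(1) B(2)] by simp
  have BC: "B \<subseteq> Cab a b" using B(1) V(2) by auto
  obtain w where w: "w \<in> FV.span B" "\<forall>v\<in>B. L2ip a b (\<lambda>t. f t - w t) v = 0"
    using gs[OF fB BC f] by blast
  have spV: "FV.span B \<subseteq> V" by (rule FV.span_minimal[OF B(1) V(1)])
  have wC: "w \<in> Cab a b" using w(1) spV V(2) by auto
  have fwC: "(\<lambda>t. f t - w t) \<in> Cab a b" using f wC by (auto simp: Cab_def intro!: continuous_intros)
  have "\<forall>v\<in>FV.span B. L2ip a b (\<lambda>t. f t - w t) v = 0" by (rule orth_span[OF fwC BC w(2)])
  hence "\<forall>v\<in>V. L2ip a b (\<lambda>t. f t - w t) v = 0" using B(3) by blast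
  moreover have "w \<in> V" using w(1) spV by blast
  ultimately show ?thesis by blast
qed

lemma sum_fun_app: "(\<Sum>j\<in>J. F j) (t::'a) = (\<Sum>j\<in>J. (F j t :: real))"
  by (induction J rule: infinite_finite_induct) simp_all

lemma Ysp_subspace: "FV.subspace (Ysp a b n x M)"
proof (rule FV.subspaceI)
  show "0 \<in> Ysp a b n x M" unfolding Ysp_def by (auto intro: exI[of _ 0])
next
  fix f g assume f: "f \<in> Ysp a b n x M" and g: "g \<in> Ysp a b n x M"
  show "f + g \<in> Ysp a b n x M" unfolding Ysp_def
  proof (safe)
    fix t assume "t \<notin> {a..b}" thus "(f + g) t = 0" using f g unfolding Ysp_def by auto
  next
    fix i assume i: "i < n"
    obtain p where p: "degree p \<le> M" "\<forall>t\<in>{x i..x (Suc i)}. f t = poly p t" using f i unfolding Ysp_def by blast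
    obtain q where q: "degree q \<le> M" "\<forall>t\<in>{x i..x (Suc i)}. g t = poly q t" using g i unfolding Ysp_def by blast
    show "\<exists>p. degree p \<le> M \<and> (\<forall>t\<in>{x i..x (Suc i)}. (f + g) t = poly p t)"
      using p q by (intro exI[of _ "p + q"]) (auto intro: order.trans[OF degree_add_le_max])
  qed
next
  fix c f assume f: "f \<in> Ysp a b n x M"
  show "(\<lambda>t. c * f t) \<in> Ysp a b n x M" unfolding Ysp_def
  proof (safe)
    fix t assume "t \<notin> {a..b}" thus "c * f t = 0" using f unfolding Ysp_def by auto
  next
    fix i assume i: "i < n"
    obtain p where p: "degree p \<le> M" "\<forall>t\<in>{x i..x (Suc i)}. f t = poly p t" using f i unfolding Ysp_def by blast
    show "\<exists>p. degree p \<le> M \<and> (\<forall>t\<in>{x i..x (Suc i)}. c * f t = poly p t)"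
      using p by (intro exI[of _ "smult c p"]) (auto intro: order.trans[OF degree_smult_le])
  qed
qed

lemma Wt_subspace: "FV.subspace (Wt a b n x M)"
proof -
  have Y: "FV.subspace (Ysp a b n x M)" by (rule Ysp_subspace)
  show ?thesis
  proof (rule FV.subspaceI)
    show "0 \<in> Wt a b n x M" using Y unfolding Wt_def FV.subspace_def by (auto intro: exI[of _ 0])
  next
    fix f g assume f: "f \<in> Wt a b n x M" and g: "g \<in> Wt a b n x M"
    obtain p1 q1 where "degree p1 \<le> M - 1" "\<forall>t\<in>{x 0..x 1}. f t = poly p1 t"
      "degree q1 \<le> M - 1" "\<forall>t\<in>{x (n - 1)..x n}. f t = poly q1 t" using f unfolding Wt_def by blast
    moreover obtain p2 q2 where "degree p2 \<le> M - 1" "\<forall>t\<in>{x 0..x 1}. g t = poly p2 t"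
      "degree q2 \<le> M - 1" "\<forall>t\<in>{x (n - 1)..x n}. g t = poly q2 t" using g unfolding Wt_def by blast
    ultimately have "(\<exists>p. degree p \<le> M - 1 \<and> (\<forall>t\<in>{x 0..x 1}. (f + g) t = poly p t)) \<and>
        (\<exists>q. degree q \<le> M - 1 \<and> (\<forall>t\<in>{x (n - 1)..x n}. (f + g) t = poly q t))"
      by (intro conjI exI[of _ "p1 + p2"] exI[of _ "q1 + q2"]) (auto intro: order.trans[OF degree_add_le_max])
    moreover have "f + g \<in> Ysp a b n x M" using f g Y unfolding Wt_def FV.subspace_def by blast
    ultimately show "f + g \<in> Wt a b n x M" unfolding Wt_def by blast
  next
    fix c f assume f: "f \<in> Wt a b n x M"
    obtain p1 q1 where "degree p1 \<le> M - 1" "\<forall>t\<in>{x 0..x 1}. f t = poly p1 t"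
      "degree q1 \<le> M - 1" "\<forall>t\<in>{x (n - 1)..x n}. f t = poly q1 t" using f unfolding Wt_def by blast
    hence "(\<exists>p. degree p \<le> M - 1 \<and> (\<forall>t\<in>{x 0..x 1}. c * f t = poly p t)) \<and>
        (\<exists>q. degree q \<le> M - 1 \<and> (\<forall>t\<in>{x (n - 1)..x n}. c * f t = poly q t))"
      by (intro conjI exI[of _ "smult c p1"] exI[of _ "smult c q1"]) (auto intro: order.trans[OF degree_smult_le])
    moreover have "(\<lambda>t. c * f t) \<in> Ysp a b n x M" using f Y unfolding Wt_def FV.subspace_def by blast
    ultimately show "(\<lambda>t. c * f t) \<in> Wt a b n x M" unfolding Wt_def by blast
  qed
qed


definition chi :: "(nat \<Rightarrow> real) \<Rightarrow> nat \<times> nat \<Rightarrow> real \<Rightarrow> real" where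
  "chi x q t = (if x (fst q) \<le> t \<and> t < x (Suc (fst q)) then t ^ snd q else 0)"

definition dlt :: "real \<Rightarrow> real \<Rightarrow> real" where
  "dlt b t = (if t = b then 1 else 0)"

definition S0 :: "real \<Rightarrow> nat \<Rightarrow> (nat \<Rightarrow> real) \<Rightarrow> nat \<Rightarrow> (real \<Rightarrow> real) set" where
  "S0 b n x M = chi x ` ({..<n} \<times> {..M}) \<union> {dlt b}"

lemma finite_S0: "finite (S0 b n x M)"
  unfolding S0_def by auto

lemma halfopen_cover:
  assumes m: "mesh1d a b h \<theta> n x" "\<theta> > 0" and t: "a \<le> t" "t < b"
  shows "\<exists>i<n. x i \<le> t \<and> t < x (Suc i)"
proof -
  obtain i where i: "i < n" "x i \<le> t" "t \<le> x (Suc i)" using mesh_cover[OF m, of t] t by auto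
  show ?thesis
  proof (cases "t < x (Suc i)")
    case True thus ?thesis using i by blast
  next
    case False
    hence te: "t = x (Suc i)" using i by simp
    have "Suc i \<noteq> n" using te t mesh_basic[OF m] by auto
    hence si: "Suc i < n" using i by simp
    have "x (Suc i) < x (Suc (Suc i))" using mesh_basic(5)[OF m si] .
    thus ?thesis using si te by (intro exI[of _ "Suc i"]) auto
  qed
qed

lemma Ysp_span:
  assumes m: "mesh1d a b h \<theta> n x" "\<theta> > 0"
  shows "Ysp a b n x M \<subseteq> FV.span (S0 b n x M)"
proof
  fix f assume f: "f \<in> Ysp a b n x M"
  define pp where "pp i = (SOME p. degree p \<le> M \<and> (\<forall>t\<in>{x i..x (Suc i)}. f t = poly p t))" for i
  have pp: "degree (pp i) \<le> M \<and> (\<forall>t\<in>{x i..x (Suc i)}. f t = poly (pp i) t)" if "i < n" for i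
    unfolding pp_def by (rule someI_ex) (use f that in \<open>auto simp: Ysp_def\<close>)
  let ?I = "{..<n} \<times> {..M}"
  define g where "g = (\<Sum>q\<in>?I. (\<lambda>t. coeff (pp (fst q)) (snd q) * chi x q t)) + (\<lambda>t. f b * dlt b t)"
  have "g \<in> FV.span (S0 b n x M)" unfolding g_def
    by (intro FV.span_add FV.span_sum FV.span_scale FV.span_base) (auto simp: S0_def)
  moreover have "f = g"
  proof
    fix t
    have gt: "g t = (\<Sum>q\<in>?I. coeff (pp (fst q)) (snd q) * chi x q t) + f b * dlt b t"
      unfolding g_def by (simp add: sum_fun_app)
    have chi_out: "chi x q t = 0" if "q \<in> ?I" "\<not> (a \<le> t \<and> t < b)" for q
    proof -
      have "fst q < n" using that by auto
      hence "a \<le> x (fst q)" "x (Suc (fst q)) \<le> b" using mesh_range[OF m] by auto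
      thus ?thesis using that unfolding chi_def by auto
    qed
    show "f t = g t"
    proof (cases "a \<le> t \<and> t < b")
      case False
      hence s0: "(\<Sum>q\<in>?I. coeff (pp (fst q)) (snd q) * chi x q t) = 0" using chi_out by simp
      show ?thesis
      proof (cases "t = b")
        case True thus ?thesis unfolding gt s0 by (simp add: dlt_def)
      next
        case tb: False
        hence "t \<notin> {a..b}" using False by auto
        hence "f t = 0" using f unfolding Ysp_def by auto
        thus ?thesis unfolding gt s0 using tb by (simp add: dlt_def)
      qed
    next
      case True
      obtain i0 where i0: "i0 < n" "x i0 \<le> t" "t < x (Suc i0)" using halfopen_cover[OF m] True by blast
      have chi0: "chi x (i, k) t = 0" if "i < n" "i \<noteq> i0" for i k
      proof (cases "i < i0")
        case True
        hence "x (Suc i) \<le> x i0" using mesh_mono[OF m] i0 by simp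
        thus ?thesis using i0 by (simp add: chi_def)
      next
        case False
        hence "Suc i0 \<le> i" using that by simp
        hence "x (Suc i0) \<le> x i" using mesh_mono[OF m] that by simp
        thus ?thesis using i0 by (simp add: chi_def)
      qed
      have "(\<Sum>q\<in>?I. coeff (pp (fst q)) (snd q) * chi x q t) =
          (\<Sum>i<n. \<Sum>k\<le>M. coeff (pp i) k * chi x (i, k) t)"
        by (simp add: sum.cartesian_product split_def)
      also have "\<dots> = (\<Sum>k\<le>M. coeff (pp i0) k * chi x (i0, k) t) +
          (\<Sum>i\<in>{..<n} - {i0}. \<Sum>k\<le>M. coeff (pp i) k * chi x (i, k) t)"
        using i0(1) by (intro sum.remove) auto
      also have "(\<Sum>i\<in>{..<n} - {i0}. \<Sum>k\<le>M. coeff (pp i) k * chi x (i, k) t) = 0"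
        using chi0 by (intro sum.neutral) auto
      hence "(\<Sum>k\<le>M. coeff (pp i0) k * chi x (i0, k) t) +
          (\<Sum>i\<in>{..<n} - {i0}. \<Sum>k\<le>M. coeff (pp i) k * chi x (i, k) t) = (\<Sum>k\<le>M. coeff (pp i0) k * chi x (i0, k) t)"
        by simp
      also have "\<dots> = (\<Sum>k\<le>M. coeff (pp i0) k * t ^ k)"
        using i0 by (simp add: chi_def)
      also have "\<dots> = poly (pp i0) t"
        using poly_sum_N[of "pp i0" "Suc M" t] pp[OF i0(1)] by (simp add: lessThan_Suc_atMost)
      also have "\<dots> = f t" using pp[OF i0(1)] i0 by auto
      finally have s: "(\<Sum>q\<in>?I. coeff (pp (fst q)) (snd q) * chi x q t) = f t" .
      have "dlt b t = 0" using True by (simp add: dlt_def)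
      thus ?thesis unfolding gt s by simp
    qed
  qed
  ultimately show "f \<in> FV.span (S0 b n x M)" by simp
qed


lemma Wt_Ysp: "Wt a b n x M \<subseteq> Ysp a b n x M"
  unfolding Wt_def by auto

lemma Wt_Cab: "mesh1d a b h \<theta> n x \<Longrightarrow> \<theta> > 0 \<Longrightarrow> Wt a b n x M \<subseteq> Cab a b"
  using Ysp_cont Wt_Ysp unfolding Cab_def by blast

lemma zero_of_ip:
  assumes "d \<in> Cab a b" "L2ip a b d d = 0" "a < b" "t \<in> {a..b}"
  shows "d t = 0"
proof -
  have "((\<lambda>t. d t * d t) has_integral 0) (cbox a b)"
    using Cab_prod_int[OF assms(1,1)] assms(2) unfolding L2ip_def
    by (metis cbox_interval has_integral_integrable_integral)
  hence "d t * d t = 0"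
    using assms(1,3,4) unfolding Cab_def
    by (intro has_integral_0_cbox_imp_0[where f="\<lambda>t. d t * d t" and a=a and b=b])
       (auto intro!: continuous_intros simp: cbox_interval)
  thus ?thesis by simp
qed

lemma L2proj_char:
  assumes m: "mesh1d a b h \<theta> n x" "\<theta> > 0" and ab: "a < b" and f: "f \<in> Cab a b"
  shows "L2proj a b n x M f \<in> Wt a b n x M \<and>
    (\<forall>v\<in>Wt a b n x M. L2ip a b (\<lambda>t. f t - L2proj a b n x M f t) v = 0)"
proof -
  let ?W = "Wt a b n x M"
  let ?P = "\<lambda>w. w \<in> ?W \<and> (\<forall>v\<in>?W. L2ip a b (\<lambda>t. f t - w t) v = 0)"
  have WC: "?W \<subseteq> Cab a b" by (rule Wt_Cab[OF m])
  have Wsp: "?W \<subseteq> FV.span (S0 b n x M)" using Wt_Ysp Ysp_span[OF m] by blast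
  obtain w where w: "?P w" using proj_exists[OF Wt_subspace WC finite_S0 Wsp f] by blast
  have uniq: "w' = w" if w': "?P w'" for w'
  proof
    fix t
    define d where "d = (\<lambda>t. w t - w' t)"
    have dW: "d \<in> ?W"
    proof -
      have "w + (\<lambda>t. (-1) * w' t) \<in> ?W" using Wt_subspace w w' unfolding FV.subspace_def by blast
      thus ?thesis by (simp add: d_def func_plus)
    qed
    have dC: "d \<in> Cab a b" using dW WC by auto
    have wC: "w \<in> Cab a b" "w' \<in> Cab a b" using w w' WC by auto
    have c1: "(\<lambda>t. f t - w' t) \<in> Cab a b" "(\<lambda>t. f t - w t) \<in> Cab a b"
      using f wC by (auto simp: Cab_def intro!: continuous_intros)
    have deq: "d = (\<lambda>t. 1 * (f t - w' t) + (-1) * (f t - w t))" by (auto simp: d_def)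
    have "L2ip a b d d = 1 * L2ip a b (\<lambda>t. f t - w' t) d + (-1) * L2ip a b (\<lambda>t. f t - w t) d"
      by (subst (1) deq, rule ip_lin2[OF c1 dC])
    also have "\<dots> = 0" using w w' dW by simp
    finally have dd: "L2ip a b d d = 0" .
    show "w' t = w t"
    proof (cases "t \<in> {a..b}")
      case True
      thus ?thesis using zero_of_ip[OF dC dd ab True] by (simp add: d_def)
    next
      case False
      have "w \<in> Ysp a b n x M" "w' \<in> Ysp a b n x M" using w w' Wt_Ysp[of a b n x M] by blast+
      thus ?thesis using False unfolding Ysp_def by auto
    qed
  qed
  have "L2proj a b n x M f = w"
    unfolding L2proj_def
  proof (rule the_equality)
    show "?P w" by (rule w)
  next
    fix w' assume "?P w'" thus "w' = w" by (rule uniq)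
  qed
  thus ?thesis using w by simp
qed



lemma restrict_int:
  fixes f g :: "real \<Rightarrow> real"
  assumes "(f has_integral v) {c..d}" "a \<le> c" "d \<le> b"
    and "\<And>t. g t = (if t \<in> {c..d} then f t else 0)"
  shows "(g has_integral v) {a..b}"
proof -
  have "{c..d} \<subseteq> {a..b}" using assms(2,3) by auto
  hence "((\<lambda>t. if t \<in> cbox c d then f t else 0) has_integral v) (cbox a b)"
    using has_integral_restrict_closed_subinterval[of f v c d a b] assms(1) by (simp add: cbox_interval)
  moreover have "g = (\<lambda>t. if t \<in> cbox c d then f t else 0)" using assms(4) by (auto simp: cbox_interval)
  ultimately show ?thesis by (simp add: cbox_interval)
qed

lemma young_step:
  assumes C: "\<eta> \<in> Cab a b" "w \<in> Cab a b" "\<psi> \<in> Cab a b"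
    and orth: "L2ip a b (\<lambda>t. \<eta> t - w t) w = 0"
  shows "L2ip a b (\<lambda>t. \<eta> t + w t) \<psi> \<ge> 3/2 * L2ip a b \<eta> \<psi> - 5/4 * L2ip a b \<eta> \<eta> - L2ip a b \<psi> \<psi> / 20"
proof -
  let ?I = "\<lambda>f g. integral {a..b} (\<lambda>t. f t * g t)"
  have H: "((\<lambda>t. f t * g t) has_integral ?I f g) {a..b}" if "f \<in> Cab a b" "g \<in> Cab a b" for f g :: "real \<Rightarrow> real"
    using Cab_prod_int[OF that] by (rule integrable_integral)
  have sym: "?I f g = ?I g f" for f g :: "real \<Rightarrow> real"
  proof -
    have "(\<lambda>t. f t * g t) = (\<lambda>t. g t * f t)" by (simp add: fun_eq_iff mult.commute)
    thus ?thesis by simp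
  qed
  have ww: "((\<lambda>t. w t * w t) has_integral ?I w w) {a..b}" by (rule H[OF C(2) C(2)])
  have we: "((\<lambda>t. w t * \<eta> t) has_integral ?I \<eta> w) {a..b}" using H[OF C(2) C(1)] sym[of w \<eta>] by simp
  have wp: "((\<lambda>t. w t * \<psi> t) has_integral ?I w \<psi>) {a..b}" by (rule H[OF C(2) C(3)])
  have ee: "((\<lambda>t. \<eta> t * \<eta> t) has_integral ?I \<eta> \<eta>) {a..b}" by (rule H[OF C(1) C(1)])
  have ep: "((\<lambda>t. \<eta> t * \<psi> t) has_integral ?I \<eta> \<psi>) {a..b}" by (rule H[OF C(1) C(3)])
  have pp: "((\<lambda>t. \<psi> t * \<psi> t) has_integral ?I \<psi> \<psi>) {a..b}" by (rule H[OF C(3) C(3)])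
  have o2: "((\<lambda>t. (\<eta> t - w t) * w t) has_integral ?I \<eta> w - ?I w w) {a..b}"
  proof -
    have "((\<lambda>t. \<eta> t * w t - w t * w t) has_integral ?I \<eta> w - ?I w w) {a..b}"
      by (intro has_integral_diff H C)
    thus ?thesis by (simp add: algebra_simps)
  qed
  have ew: "?I \<eta> w = ?I w w" using orth o2 unfolding L2ip_def
    by (metis (no_types, lifting) eq_iff_diff_eq_0 integral_unique)
  have sq: "((\<lambda>t. 100 * (w t * w t) + (-100) * (w t * \<eta> t) + 20 * (w t * \<psi> t) + 25 * (\<eta> t * \<eta> t)
      + (-10) * (\<eta> t * \<psi> t) + 1 * (\<psi> t * \<psi> t)) has_integral
      (100 * ?I w w + (-100) * ?I \<eta> w + 20 * ?I w \<psi> + 25 * ?I \<eta> \<eta> + (-10) * ?I \<eta> \<psi> + 1 * ?I \<psi> \<psi>)) {a..b}"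
    by (intro has_integral_add has_integral_mult_right ww we wp ee ep pp)
  have "0 \<le> 100 * ?I w w + (-100) * ?I \<eta> w + 20 * ?I w \<psi> + 25 * ?I \<eta> \<eta> + (-10) * ?I \<eta> \<psi> + 1 * ?I \<psi> \<psi>"
  proof (rule has_integral_nonneg[OF sq])
    fix t
    have "100 * (w t * w t) + (-100) * (w t * \<eta> t) + 20 * (w t * \<psi> t) + 25 * (\<eta> t * \<eta> t)
      + (-10) * (\<eta> t * \<psi> t) + 1 * (\<psi> t * \<psi> t) = (10 * w t - 5 * \<eta> t + \<psi> t)^2"
      by (simp add: algebra_simps power2_eq_square)
    thus "0 \<le> 100 * (w t * w t) + (-100) * (w t * \<eta> t) + 20 * (w t * \<psi> t) + 25 * (\<eta> t * \<eta> t)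
      + (-10) * (\<eta> t * \<psi> t) + 1 * (\<psi> t * \<psi> t)" by simp
  qed
  hence k: "?I w \<psi> \<ge> ?I \<eta> \<psi> / 2 - 5/4 * ?I \<eta> \<eta> - ?I \<psi> \<psi> / 20" using ew by simp
  have "((\<lambda>t. (\<eta> t + w t) * \<psi> t) has_integral ?I \<eta> \<psi> + ?I w \<psi>) {a..b}"
  proof -
    have "((\<lambda>t. \<eta> t * \<psi> t + w t * \<psi> t) has_integral ?I \<eta> \<psi> + ?I w \<psi>) {a..b}"
      by (intro has_integral_add ep wp)
    thus ?thesis by (simp add: algebra_simps)
  qed
  hence "L2ip a b (\<lambda>t. \<eta> t + w t) \<psi> = ?I \<eta> \<psi> + ?I w \<psi>" unfolding L2ip_def by (rule integral_unique)
  thus ?thesis using k unfolding L2ip_def by simp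
qed


lemma construct_psi:
  assumes M1: "1 \<le> M" and M13: "M \<le> 13" and th: "\<theta> > 0" and ab: "a < b"
    and my: "mesh1d a b h \<theta> m y" and eta: "\<eta> \<in> Ysp a b m y M" and ea: "\<eta> a = 0" and eb: "\<eta> b = 0"
  shows "\<exists>\<psi>\<in>Wt a b m y M. 3/2 * L2ip a b \<eta> \<psi> - 5/4 * L2ip a b \<eta> \<eta> - L2ip a b \<psi> \<psi> / 20 \<ge> L2ip a b \<eta> \<eta> / 100
     \<and> L2ip a b \<psi> \<psi> \<le> 81 * L2ip a b \<eta> \<eta>"
proof -
  note mb = mesh_basic[OF my th]
  have m1: "1 \<le> m" and y0: "y 0 = a" and ym: "y m = b" using mb by auto
  define P where "P i = (SOME p. degree p \<le> M \<and> (\<forall>t\<in>{y i..y (Suc i)}. \<eta> t = poly p t))" for i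
  have Ps: "degree (P i) \<le> M \<and> (\<forall>t\<in>{y i..y (Suc i)}. \<eta> t = poly (P i) t)" if "i < m" for i
    unfolding P_def by (rule someI_ex) (use eta that in \<open>auto simp: Ysp_def\<close>)
  have ay1: "a < y 1" using mesh_smono[OF my th, of 0 1] m1 y0 by simp
  have y1b: "y 1 \<le> b" using mesh_range[OF my th, of 1] m1 by simp
  have ymb: "y (m - 1) < b" using mesh_smono[OF my th, of "m - 1" m] m1 ym by simp
  have aym: "a \<le> y (m - 1)" using mesh_range[OF my th, of "m - 1"] by simp
  define P0 where "P0 = P 0"
  have P0s: "degree P0 \<le> M" "\<And>t. t \<in> {a..y 1} \<Longrightarrow> \<eta> t = poly P0 t"
    using Ps[of 0] m1 y0 by (auto simp: P0_def)
  have P0a: "poly P0 a = 0" using P0s(2)[of a] ay1 ea by simp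
  obtain \<Psi>L ppL pqL qqL where L: "degree \<Psi>L < M" "poly \<Psi>L (y 1) = poly P0 (y 1)"
    "((\<lambda>s. poly P0 s * poly P0 s) has_integral ppL) {a..y 1}"
    "((\<lambda>s. poly P0 s * poly \<Psi>L s) has_integral pqL) {a..y 1}"
    "((\<lambda>s. poly \<Psi>L s * poly \<Psi>L s) has_integral qqL) {a..y 1}"
    "3/2*pqL - 5/4*ppL - qqL/20 \<ge> ppL/100" "qqL \<le> 81*ppL"
    using elem_local[OF M1 M13 ay1, of a "y 1" P0] P0s(1) P0a by blast
  define PR where "PR = P (m - 1)"
  have PRs: "degree PR \<le> M" "\<And>t. t \<in> {y (m - 1)..b} \<Longrightarrow> \<eta> t = poly PR t"
    using Ps[of "m - 1"] m1 ym by (auto simp: PR_def)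
  have PRb: "poly PR b = 0" using PRs(2)[of b] ymb eb by simp
  obtain \<Psi>R ppR pqR qqR where R: "2 \<le> m \<longrightarrow> (degree \<Psi>R < M \<and> poly \<Psi>R (y (m - 1)) = poly PR (y (m - 1)) \<and>
    ((\<lambda>s. poly PR s * poly PR s) has_integral ppR) {y (m - 1)..b} \<and>
    ((\<lambda>s. poly PR s * poly \<Psi>R s) has_integral pqR) {y (m - 1)..b} \<and>
    ((\<lambda>s. poly \<Psi>R s * poly \<Psi>R s) has_integral qqR) {y (m - 1)..b} \<and>
    3/2*pqR - 5/4*ppR - qqR/20 \<ge> ppR/100 \<and> qqR \<le> 81*ppR)"
    and R0: "\<not> 2 \<le> m \<longrightarrow> ppR = 0 \<and> pqR = 0 \<and> qqR = 0"
  proof (cases "2 \<le> m")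
    case True
    obtain \<Psi>R ppR pqR qqR where "degree \<Psi>R < M \<and> poly \<Psi>R (y (m - 1)) = poly PR (y (m - 1)) \<and>
    ((\<lambda>s. poly PR s * poly PR s) has_integral ppR) {y (m - 1)..b} \<and>
    ((\<lambda>s. poly PR s * poly \<Psi>R s) has_integral pqR) {y (m - 1)..b} \<and>
    ((\<lambda>s. poly \<Psi>R s * poly \<Psi>R s) has_integral qqR) {y (m - 1)..b} \<and>
    3/2*pqR - 5/4*ppR - qqR/20 \<ge> ppR/100 \<and> qqR \<le> 81*ppR"
      using elem_local[OF M1 M13 ymb, of b "y (m - 1)" PR] PRs(1) PRb by blast
    thus ?thesis using that True by blast
  next
    case False
    thus ?thesis using that[of 0 0 0 0] by blast
  qed
  define eL where "eL t = (if t \<in> {a..y 1} then poly P0 t - poly \<Psi>L t else 0)" for t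
  define eR where "eR t = (if 2 \<le> m \<and> t \<in> {y (m - 1)..b} then poly PR t - poly \<Psi>R t else 0)" for t
  define \<psi> where "\<psi> t = \<eta> t - eL t - eR t" for t
  have eL_eq: "eL t = (if i = 0 then poly P0 t - poly \<Psi>L t else 0)" if "i < m" "t \<in> {y i..y (Suc i)}" for i t
  proof (cases "i = 0")
    case True thus ?thesis using that y0 by (simp add: eL_def)
  next
    case False
    hence "y 1 \<le> y i" using mesh_mono[OF my th, of 1 i] that by simp
    hence "y 1 \<le> t" using that by simp
    thus ?thesis using False L(2) by (auto simp: eL_def)
  qed
  have eR_eq: "eR t = (if 2 \<le> m \<and> i = m - 1 then poly PR t - poly \<Psi>R t else 0)" if "i < m" "t \<in> {y i..y (Suc i)}" for i t
  proof (cases "2 \<le> m \<and> i = m - 1")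
    case True thus ?thesis using that ym by (simp add: eR_def)
  next
    case False
    show ?thesis
    proof (cases "2 \<le> m")
      case False thus ?thesis by (simp add: eR_def)
    next
      case True
      hence "Suc i \<le> m - 1" using False that by auto
      hence "y (Suc i) \<le> y (m - 1)" using mesh_mono[OF my th, of "Suc i" "m - 1"] by simp
      hence "t \<le> y (m - 1)" using that by simp
      thus ?thesis using False R True by (auto simp: eR_def)
    qed
  qed
  have psi_eq: "\<psi> t = poly (P i - (if i = 0 then P0 - \<Psi>L else 0) - (if 2 \<le> m \<and> i = m - 1 then PR - \<Psi>R else 0)) t"
    if "i < m" "t \<in> {y i..y (Suc i)}" for i t
    using Ps[OF that(1)] that eL_eq[OF that] eR_eq[OF that] by (simp add: \<psi>_def)
  have psiW: "\<psi> \<in> Wt a b m y M"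
  proof -
    have out: "\<psi> t = 0" if "t \<notin> {a..b}" for t
    proof -
      have "\<eta> t = 0" using eta that unfolding Ysp_def by auto
      moreover have "eL t = 0" using that y1b by (auto simp: eL_def)
      moreover have "eR t = 0" using that aym by (auto simp: eR_def)
      ultimately show ?thesis by (simp add: \<psi>_def)
    qed
    have el: "\<exists>p. degree p \<le> M \<and> (\<forall>t\<in>{y i..y (Suc i)}. \<psi> t = poly p t)" if "i < m" for i
    proof -
      let ?p = "P i - (if i = 0 then P0 - \<Psi>L else 0) - (if 2 \<le> m \<and> i = m - 1 then PR - \<Psi>R else 0)"
      have dL: "degree (if i = 0 then P0 - \<Psi>L else 0) \<le> M"
        using P0s(1) L(1) by (auto intro!: degree_diff_le)
      have dR: "degree (if 2 \<le> m \<and> i = m - 1 then PR - \<Psi>R else 0) \<le> M"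
        using PRs(1) R by (auto intro!: degree_diff_le)
      have "degree ?p \<le> M" using Ps[OF that] dL dR by (intro degree_diff_le) auto
      thus ?thesis using psi_eq[OF that] by blast
    qed
    have first: "\<exists>p. degree p \<le> M - 1 \<and> (\<forall>t\<in>{y 0..y 1}. \<psi> t = poly p t)"
    proof (intro exI conjI ballI)
      show "degree \<Psi>L \<le> M - 1" using L(1) by simp
      fix t assume t: "t \<in> {y 0..y 1}"
      have "\<psi> t = poly (P 0 - (P0 - \<Psi>L) - (if 2 \<le> m \<and> 0 = m - 1 then PR - \<Psi>R else 0)) t"
        using psi_eq[of 0 t] m1 t by simp
      also have "\<dots> = poly \<Psi>L t" by (auto simp: P0_def)
      finally show "\<psi> t = poly \<Psi>L t" .
    qed
    have last: "\<exists>q. degree q \<le> M - 1 \<and> (\<forall>t\<in>{y (m - 1)..y m}. \<psi> t = poly q t)"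
    proof (cases "2 \<le> m")
      case False
      hence "m = 1" using m1 by simp
      thus ?thesis using first by simp
    next
      case True
      show ?thesis
      proof (intro exI conjI ballI)
        have "degree \<Psi>R < M" using R True by blast
        thus "degree \<Psi>R \<le> M - 1" by simp
        fix t assume t: "t \<in> {y (m - 1)..y m}"
        have "\<psi> t = poly (P (m - 1) - 0 - (PR - \<Psi>R)) t"
          using psi_eq[of "m - 1" t] True t by simp
        also have "\<dots> = poly \<Psi>R t" by (simp add: PR_def)
        finally show "\<psi> t = poly \<Psi>R t" .
      qed
    qed
    show ?thesis unfolding Wt_def Ysp_def using out el first last by blast
  qed
  have etaC: "\<eta> \<in> Cab a b" using Ysp_cont[OF my th eta] by (simp add: Cab_def)
  define S where "S = L2ip a b \<eta> \<eta>"
  have iS: "((\<lambda>t. \<eta> t * \<eta> t) has_integral S) {a..b}"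
    unfolding S_def L2ip_def using Cab_prod_int[OF etaC etaC] by (rule integrable_integral)
  have iL1: "((\<lambda>t. \<eta> t * eL t) has_integral ppL - pqL) {a..b}"
  proof (rule restrict_int[OF _ order.refl y1b])
    show "((\<lambda>t. poly P0 t * (poly P0 t - poly \<Psi>L t)) has_integral ppL - pqL) {a..y 1}"
      using has_integral_diff[OF L(3) L(4)] by (simp add: algebra_simps)
    fix t show "\<eta> t * eL t = (if t \<in> {a..y 1} then poly P0 t * (poly P0 t - poly \<Psi>L t) else 0)"
      using P0s(2)[of t] by (auto simp: eL_def)
  qed
  have iL2: "((\<lambda>t. eL t * eL t) has_integral ppL - 2*pqL + qqL) {a..b}"
  proof (rule restrict_int[OF _ order.refl y1b])
    have "((\<lambda>t. poly P0 t * poly P0 t - 2 * (poly P0 t * poly \<Psi>L t) + poly \<Psi>L t * poly \<Psi>L t) has_integral ppL - 2*pqL + qqL) {a..y 1}"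
      by (intro has_integral_add has_integral_diff has_integral_mult_right L(3,4,5))
    thus "((\<lambda>t. (poly P0 t - poly \<Psi>L t) * (poly P0 t - poly \<Psi>L t)) has_integral ppL - 2*pqL + qqL) {a..y 1}"
      by (simp add: algebra_simps)
    fix t show "eL t * eL t = (if t \<in> {a..y 1} then (poly P0 t - poly \<Psi>L t) * (poly P0 t - poly \<Psi>L t) else 0)"
      by (auto simp: eL_def)
  qed
  have iR1: "((\<lambda>t. \<eta> t * eR t) has_integral ppR - pqR) {a..b}"
  proof (cases "2 \<le> m")
    case True
    show ?thesis
    proof (rule restrict_int[OF _ aym order.refl])
      show "((\<lambda>t. poly PR t * (poly PR t - poly \<Psi>R t)) has_integral ppR - pqR) {y (m - 1)..b}"
        using True R has_integral_diff[of "\<lambda>s. poly PR s * poly PR s" ppR "{y (m - 1)..b}" "\<lambda>s. poly PR s * poly \<Psi>R s" pqR]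
        by (simp add: algebra_simps)
      fix t show "\<eta> t * eR t = (if t \<in> {y (m - 1)..b} then poly PR t * (poly PR t - poly \<Psi>R t) else 0)"
        using PRs(2)[of t] True by (auto simp: eR_def)
    qed
  next
    case False thus ?thesis using R0 by (simp add: eR_def)
  qed
  have iR2: "((\<lambda>t. eR t * eR t) has_integral ppR - 2*pqR + qqR) {a..b}"
  proof (cases "2 \<le> m")
    case True
    show ?thesis
    proof (rule restrict_int[OF _ aym order.refl])
      have r: "((\<lambda>s. poly PR s * poly PR s) has_integral ppR) {y (m - 1)..b}"
         "((\<lambda>s. poly PR s * poly \<Psi>R s) has_integral pqR) {y (m - 1)..b}"
         "((\<lambda>s. poly \<Psi>R s * poly \<Psi>R s) has_integral qqR) {y (m - 1)..b}" using R True by auto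
      have "((\<lambda>t. poly PR t * poly PR t - 2 * (poly PR t * poly \<Psi>R t) + poly \<Psi>R t * poly \<Psi>R t) has_integral ppR - 2*pqR + qqR) {y (m - 1)..b}"
        by (intro has_integral_add has_integral_diff has_integral_mult_right r)
      thus "((\<lambda>t. (poly PR t - poly \<Psi>R t) * (poly PR t - poly \<Psi>R t)) has_integral ppR - 2*pqR + qqR) {y (m - 1)..b}"
        by (simp add: algebra_simps)
      fix t show "eR t * eR t = (if t \<in> {y (m - 1)..b} then (poly PR t - poly \<Psi>R t) * (poly PR t - poly \<Psi>R t) else 0)"
        using True by (auto simp: eR_def)
    qed
  next
    case False thus ?thesis using R0 by (simp add: eR_def)
  qed
  have LR0: "eL t * eR t = 0" for t
  proof (cases "2 \<le> m \<and> t \<in> {a..y 1} \<and> t \<in> {y (m - 1)..b}")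
    case True
    have "1 \<le> m - 1" using True by linarith
    hence "y 1 \<le> y (m - 1)" using mesh_mono[OF my th, of 1 "m - 1"] by simp
    hence "t = y 1" using True by auto
    thus ?thesis using L(2) by (simp add: eL_def)
  next
    case False thus ?thesis by (auto simp: eL_def eR_def)
  qed
  have ieta_psi: "L2ip a b \<eta> \<psi> = S - (ppL - pqL) - (ppR - pqR)"
  proof -
    have "((\<lambda>t. \<eta> t * \<eta> t - \<eta> t * eL t - \<eta> t * eR t) has_integral S - (ppL - pqL) - (ppR - pqR)) {a..b}"
      by (intro has_integral_diff iS iL1 iR1)
    hence "((\<lambda>t. \<eta> t * \<psi> t) has_integral S - (ppL - pqL) - (ppR - pqR)) {a..b}"
      by (simp add: \<psi>_def algebra_simps)
    thus ?thesis unfolding L2ip_def by (rule integral_unique)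
  qed
  have ipsi_psi: "L2ip a b \<psi> \<psi> = S - 2*(ppL - pqL) - 2*(ppR - pqR) + (ppL - 2*pqL + qqL) + (ppR - 2*pqR + qqR)"
  proof -
    have "((\<lambda>t. \<eta> t * \<eta> t - 2 * (\<eta> t * eL t) - 2 * (\<eta> t * eR t) + eL t * eL t + eR t * eR t)
        has_integral S - 2*(ppL - pqL) - 2*(ppR - pqR) + (ppL - 2*pqL + qqL) + (ppR - 2*pqR + qqR)) {a..b}"
      by (intro has_integral_add has_integral_diff has_integral_mult_right iS iL1 iR1 iL2 iR2)
    moreover have "(\<lambda>t. \<psi> t * \<psi> t) = (\<lambda>t. \<eta> t * \<eta> t - 2 * (\<eta> t * eL t) - 2 * (\<eta> t * eR t) + eL t * eL t + eR t * eR t)"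
    proof
      fix t
      have "\<psi> t * \<psi> t = \<eta> t * \<eta> t - 2 * (\<eta> t * eL t) - 2 * (\<eta> t * eR t) + eL t * eL t + eR t * eR t + 2 * (eL t * eR t)"
        by (simp add: \<psi>_def algebra_simps)
      thus "\<psi> t * \<psi> t = \<eta> t * \<eta> t - 2 * (\<eta> t * eL t) - 2 * (\<eta> t * eR t) + eL t * eL t + eR t * eR t"
        using LR0[of t] by simp
    qed
    ultimately show ?thesis unfolding L2ip_def by (simp add: integral_unique)
  qed
  have ppL0: "ppL \<ge> 0" by (rule has_integral_nonneg[OF L(3)]) simp
  have ppR0: "ppR \<ge> 0"
  proof (cases "2 \<le> m")
    case True
    hence "((\<lambda>s. poly PR s * poly PR s) has_integral ppR) {y (m - 1)..b}" using R by blast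
    thus ?thesis by (rule has_integral_nonneg) simp
  next
    case False thus ?thesis using R0 by simp
  qed
  have Sdom: "ppL + ppR \<le> S"
  proof -
    have intab: "(\<lambda>t. \<eta> t * \<eta> t) integrable_on {a..b}" using iS by blast
    have i1: "((\<lambda>t. \<eta> t * \<eta> t) has_integral ppL) {a..y 1}"
      by (rule has_integral_eq[OF _ L(3)]) (simp add: P0s(2))
    have int2: "(\<lambda>t. \<eta> t * \<eta> t) integrable_on {y 1..b}"
      by (rule integrable_on_subinterval[OF intab]) (use ay1 in auto)
    have S1: "S = ppL + integral {y 1..b} (\<lambda>t. \<eta> t * \<eta> t)"
      using Henstock_Kurzweil_Integration.integral_combine[OF less_imp_le[OF ay1] y1b intab] integral_unique[OF iS] integral_unique[OF i1] by simp
    have "ppR \<le> integral {y 1..b} (\<lambda>t. \<eta> t * \<eta> t)"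
    proof (cases "2 \<le> m")
      case False
      have "0 \<le> integral {y 1..b} (\<lambda>t. \<eta> t * \<eta> t)" by (rule integral_nonneg[OF int2]) simp
      thus ?thesis using R0 False by simp
    next
      case True
      have "1 \<le> m - 1" using True by linarith
      hence y1m: "y 1 \<le> y (m - 1)" using mesh_mono[OF my th, of 1 "m - 1"] by simp
      have i3: "((\<lambda>t. \<eta> t * \<eta> t) has_integral ppR) {y (m - 1)..b}"
      proof -
        have h: "((\<lambda>s. poly PR s * poly PR s) has_integral ppR) {y (m - 1)..b}" using R True by blast
        show ?thesis by (rule has_integral_eq[OF _ h]) (simp add: PRs(2))
      qed
      have int4: "(\<lambda>t. \<eta> t * \<eta> t) integrable_on {y 1..y (m - 1)}"
        by (rule integrable_on_subinterval[OF intab]) (use ay1 less_imp_le[OF ymb] in auto)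
      have "integral {y 1..b} (\<lambda>t. \<eta> t * \<eta> t) = integral {y 1..y (m - 1)} (\<lambda>t. \<eta> t * \<eta> t) + ppR"
        using Henstock_Kurzweil_Integration.integral_combine[OF y1m less_imp_le[OF ymb] int2] integral_unique[OF i3] by simp
      thus ?thesis using integral_nonneg[OF int4] by simp
    qed
    thus ?thesis using S1 by simp
  qed
  have ineq1: "3/2 * L2ip a b \<eta> \<psi> - 5/4 * L2ip a b \<eta> \<eta> - L2ip a b \<psi> \<psi> / 20 \<ge> L2ip a b \<eta> \<eta> / 100"
  proof -
    have R': "3/2*pqR - 5/4*ppR - qqR/20 \<ge> ppR/100" using R R0 by (cases "2 \<le> m") auto
    show ?thesis unfolding ieta_psi ipsi_psi S_def[symmetric] using L(6) R' Sdom ppL0 ppR0 by (simp add: field_simps)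
  qed
  have ineq2: "L2ip a b \<psi> \<psi> \<le> 81 * L2ip a b \<eta> \<eta>"
  proof -
    have R': "qqR \<le> 81*ppR" using R R0 by (cases "2 \<le> m") auto
    show ?thesis unfolding ipsi_psi S_def[symmetric] using L(7) R' Sdom ppL0 ppR0 by (simp add: field_simps)
  qed
  show ?thesis using psiW ineq1 ineq2 by blast
qed


theorem lemma4:
  fixes M :: nat
  assumes "1 \<le> M" and "M \<le> 13"
  shows "\<forall>\<theta>>0. \<exists>c1>0. \<exists>c2>0. \<forall>(a::real) (b::real) (h::real) (n::nat) (m::nat)
           (x::nat \<Rightarrow> real) (y::nat \<Rightarrow> real) (\<eta>::real \<Rightarrow> real).
     a < b \<and> mesh1d a b h \<theta> n x \<and> mesh1d a b h \<theta> m y \<and>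
     \<eta> \<in> Ysp a b m y M \<and> \<eta> a = 0 \<and> \<eta> b = 0 \<longrightarrow>
     (\<exists>\<psi>\<in>Wt a b m y M.
        L2ip a b (\<lambda>t. \<eta> t + L2proj a b n x M \<eta> t) \<psi> \<ge> c1 * (L2norm a b \<eta>)\<^sup>2 \<and>
        L2norm a b \<psi> \<le> c2 * L2norm a b \<eta>)"
proof (intro allI impI)
  fix \<theta> :: real assume th: "\<theta> > 0"
  show "\<exists>c1>0. \<exists>c2>0. \<forall>(a::real) (b::real) (h::real) (n::nat) (m::nat)
           (x::nat \<Rightarrow> real) (y::nat \<Rightarrow> real) (\<eta>::real \<Rightarrow> real).
     a < b \<and> mesh1d a b h \<theta> n x \<and> mesh1d a b h \<theta> m y \<and>
     \<eta> \<in> Ysp a b m y M \<and> \<eta> a = 0 \<and> \<eta> b = 0 \<longrightarrow>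
     (\<exists>\<psi>\<in>Wt a b m y M.
        L2ip a b (\<lambda>t. \<eta> t + L2proj a b n x M \<eta> t) \<psi> \<ge> c1 * (L2norm a b \<eta>)\<^sup>2 \<and>
        L2norm a b \<psi> \<le> c2 * L2norm a b \<eta>)"
  proof (rule exI[of _ "1/100::real"], rule conjI, simp, rule exI[of _ "9::real"], rule conjI, simp, intro allI impI)
    fix a b h :: real and n m :: nat and x y :: "nat \<Rightarrow> real" and \<eta> :: "real \<Rightarrow> real"
    assume H: "a < b \<and> mesh1d a b h \<theta> n x \<and> mesh1d a b h \<theta> m y \<and>
     \<eta> \<in> Ysp a b m y M \<and> \<eta> a = 0 \<and> \<eta> b = 0"
    hence ab: "a < b" and mx: "mesh1d a b h \<theta> n x" and my: "mesh1d a b h \<theta> m y"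
      and eta: "\<eta> \<in> Ysp a b m y M" and ea: "\<eta> a = 0" and eb: "\<eta> b = 0" by auto
    obtain \<psi> where psi: "\<psi> \<in> Wt a b m y M"
      and i1: "3/2 * L2ip a b \<eta> \<psi> - 5/4 * L2ip a b \<eta> \<eta> - L2ip a b \<psi> \<psi> / 20 \<ge> L2ip a b \<eta> \<eta> / 100"
      and i2: "L2ip a b \<psi> \<psi> \<le> 81 * L2ip a b \<eta> \<eta>"
      using construct_psi[OF assms th ab my eta ea eb] by blast
    have etaC: "\<eta> \<in> Cab a b" using Ysp_cont[OF my th eta] by (simp add: Cab_def)
    define w where "w = L2proj a b n x M \<eta>"
    have wchar: "w \<in> Wt a b n x M" "\<forall>v\<in>Wt a b n x M. L2ip a b (\<lambda>t. \<eta> t - w t) v = 0"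
      using L2proj_char[OF mx th ab etaC] unfolding w_def by auto
    have wC: "w \<in> Cab a b" using wchar(1) Wt_Cab[OF mx th] by auto
    have psiC: "\<psi> \<in> Cab a b" using psi Wt_Cab[OF my th] by auto
    have orth: "L2ip a b (\<lambda>t. \<eta> t - w t) w = 0" using wchar by auto
    have y: "L2ip a b (\<lambda>t. \<eta> t + w t) \<psi> \<ge> 3/2 * L2ip a b \<eta> \<psi> - 5/4 * L2ip a b \<eta> \<eta> - L2ip a b \<psi> \<psi> / 20"
      by (rule young_step[OF etaC wC psiC orth])
    have nn: "(L2norm a b \<eta>)\<^sup>2 = L2ip a b \<eta> \<eta>" unfolding L2norm_def using ip_nonneg[of a b \<eta>] by simp
    show "\<exists>\<psi>\<in>Wt a b m y M.
        L2ip a b (\<lambda>t. \<eta> t + L2proj a b n x M \<eta> t) \<psi> \<ge> 1/100 * (L2norm a b \<eta>)\<^sup>2 \<and>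
        L2norm a b \<psi> \<le> 9 * L2norm a b \<eta>"
    proof (intro bexI[OF _ psi] conjI)
      show "L2ip a b (\<lambda>t. \<eta> t + L2proj a b n x M \<eta> t) \<psi> \<ge> 1/100 * (L2norm a b \<eta>)\<^sup>2"
        using y i1 unfolding nn w_def[symmetric] by simp
      have "L2norm a b \<psi> \<le> sqrt (81 * L2ip a b \<eta> \<eta>)" unfolding L2norm_def using i2 by (rule real_sqrt_le_mono)
      also have "\<dots> = 9 * L2norm a b \<eta>" unfolding L2norm_def real_sqrt_mult by simp
      finally show "L2norm a b \<psi> \<le> 9 * L2norm a b \<eta>" .
    qed
  qed
qed

end
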